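(* Let $p$ be a prime and let $n=\sum_{i=0}^k a_ip^i$ be the $p$-adic expansion of $n$ (with $0\le a_i<p$), with $a_k\ne0$. Let $\gamma$ be a partition of $a_0$. Then \[|\mathrm{cd}(\Omega(n;\gamma))|=|\Omega(n;\gamma)|\ge\left\lfloor\frac{a_k+1}{2}\right\rfloor\cdot\prod_{i=1}^{k-1}(a_i+1).\]
   Context: For a partition $\gamma=(\gamma_1,\ldots,\gamma_\ell)$ and natural numbers $x,y$, $\gamma\star(x,y)=(\gamma_1+x,\gamma_2,\ldots,\gamma_\ell,1^y)$. For a partition $\lambda$ of $n$, $\chi^\lambda$ is the corresponding irreducible character of $\mathfrak{S}_n$, $\lambda'$ is the conjugate partition, $C_p(\lambda)$ is the $p$-core of $\lambda$ (obtained by successively removing all hooks of length $p$), and $\lambda\vdash_{p'}n$ means $p\nmid\chi^\lambda(1)$. Writing $n=wp+m$ with $m<p$ and $\gamma$ a $p$-core partition of $m$, set $H(n;\gamma)=\{\lambda\vdash_{p'}n : C_p(\lambda)=\gamma,\ \lambda=\gamma\star(a,n-m-a)\text{ for some }a\}$ and $\Omega(n;\gamma)=\{\lambda\in H(n;\gamma):\lambda_1>(\lambda')_1\}$. For a set $X$ of partitions of $n$, $\mathrm{cd}(X)=\{\chi^\lambda(1):\lambda\in X\}$. *)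

theory Defs
  imports Main "HOL-Computational_Algebra.Primes"
begin

definition is_partition :: "nat list \<Rightarrow> bool" where
  "is_partition la \<longleftrightarrow> sorted (rev la) \<and> 0 \<notin> set la"

definition partition_of :: "nat list \<Rightarrow> nat \<Rightarrow> bool" where
  "partition_of la n \<longleftrightarrow> is_partition la \<and> sum_list la = n"

text \<open>Young diagram (0-indexed cells (row, column)).\<close>
definition diagram :: "nat list \<Rightarrow> (nat \<times> nat) set" where
  "diagram la = {(i, j). i < length la \<and> j < la ! i}"

text \<open>Conjugate partition entries: (la')_j (0-indexed column j).\<close>
definition conj_part :: "nat list \<Rightarrow> nat \<Rightarrow> nat" where
  "conj_part la j = card {i. i < length la \<and> j < la ! i}"

definition first_part :: "nat list \<Rightarrow> nat" where
  "first_part la = (if la = [] then 0 else hd la)"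

definition first_part_conj :: "nat list \<Rightarrow> nat" where
  "first_part_conj la = conj_part la 0"

definition hook_length :: "nat list \<Rightarrow> nat \<times> nat \<Rightarrow> nat" where
  "hook_length la c = (la ! fst c - snd c) + (conj_part la (snd c) - fst c) - 1"

text \<open>Degree chi^la(1) of the irreducible character of S_n labelled by la,
  given by the hook length formula.\<close>
definition char_degree :: "nat list \<Rightarrow> nat" where
  "char_degree la = fact (sum_list la) div (\<Prod>c\<in>diagram la. hook_length la c)"

text \<open>Rim hooks (border strips): connected skew diagrams without 2x2 squares.\<close>
definition cell_adj :: "nat \<times> nat \<Rightarrow> nat \<times> nat \<Rightarrow> bool" where
  "cell_adj c d \<longleftrightarrow>
     (fst c = fst d \<and> (snd d = Suc (snd c) \<or> snd c = Suc (snd d))) \<or>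
     (snd c = snd d \<and> (fst d = Suc (fst c) \<or> fst c = Suc (fst d)))"

definition cells_connected :: "(nat \<times> nat) set \<Rightarrow> bool" where
  "cells_connected S \<longleftrightarrow> S \<noteq> {} \<and>
     (\<forall>c\<in>S. \<forall>d\<in>S. (\<lambda>x y. x \<in> S \<and> y \<in> S \<and> cell_adj x y)\<^sup>*\<^sup>* c d)"

definition no_square :: "(nat \<times> nat) set \<Rightarrow> bool" where
  "no_square S \<longleftrightarrow> \<not> (\<exists>i j. (i, j) \<in> S \<and> (Suc i, j) \<in> S \<and> (i, Suc j) \<in> S \<and> (Suc i, Suc j) \<in> S)"

definition remove_hook :: "nat \<Rightarrow> nat list \<Rightarrow> nat list \<Rightarrow> bool" where
  "remove_hook p la mu \<longleftrightarrow> is_partition mu \<and> diagram mu \<subseteq> diagram la \<and>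
     card (diagram la - diagram mu) = p \<and>
     cells_connected (diagram la - diagram mu) \<and> no_square (diagram la - diagram mu)"

definition is_p_core_of :: "nat \<Rightarrow> nat list \<Rightarrow> nat list \<Rightarrow> bool" where
  "is_p_core_of p la gm \<longleftrightarrow> (remove_hook p)\<^sup>*\<^sup>* la gm \<and> \<not> (\<exists>mu. remove_hook p gm mu)"

text \<open>gm \<star> (x,y) = (gm_1 + x, gm_2, ..., gm_l, 1^y); for empty gm, gm_1 = 0
  and a resulting zero part is discarded.\<close>
definition star :: "nat list \<Rightarrow> nat \<Rightarrow> nat \<Rightarrow> nat list" where
  "star gm x y = filter (\<lambda>t. t \<noteq> 0) ((first_part gm + x) # tl gm @ replicate y 1)"

text \<open>H(n;gm), with n = wp + m, m < p.\<close>
definition H_set :: "nat \<Rightarrow> nat \<Rightarrow> nat list \<Rightarrow> nat list set" where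
  "H_set p n gm = {la. partition_of la n \<and> \<not> p dvd char_degree la \<and> is_p_core_of p la gm \<and>
      (\<exists>a. a \<le> n - n mod p \<and> la = star gm a (n - n mod p - a))}"

definition Omega_set :: "nat \<Rightarrow> nat \<Rightarrow> nat list \<Rightarrow> nat list set" where
  "Omega_set p n gm = {la \<in> H_set p n gm. first_part la > first_part_conj la}"

definition cd :: "nat list set \<Rightarrow> nat set" where
  "cd X = char_degree ` X"

end

theory Submission
  imports Defs "HOL-Computational_Algebra.Polynomial" "HOL-Library.FuncSet"
begin

lemma is_partition_iff:
  "is_partition la \<longleftrightarrow> (\<forall>i j. i \<le> j \<longrightarrow> j < length la \<longrightarrow> la!j \<le> la!i) \<and> (\<forall>i<length la. 0 < la!i)"
  unfolding is_partition_def sorted_rev_iff_nth_mono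
  by (auto simp: in_set_conv_nth)

lemma part_mono: "is_partition la \<Longrightarrow> i \<le> j \<Longrightarrow> j < length la \<Longrightarrow> la!j \<le> la!i"
  by (simp add: is_partition_iff)

lemma part_pos: "is_partition la \<Longrightarrow> i < length la \<Longrightarrow> 0 < la!i"
  by (simp add: is_partition_iff)

lemma diagram_finite: "finite (diagram la)"
proof -
  have "diagram la \<subseteq> {..<length la} \<times> {..<sum_list la + 1}"
  proof
    fix c assume "c \<in> diagram la"
    then obtain i j where c: "c = (i,j)" "i < length la" "j < la!i" by (auto simp: diagram_def)
    have "la!i \<le> sum_list la" using c(2) by (simp add: elem_le_sum_list)
    thus "c \<in> {..<length la} \<times> {..<sum_list la + 1}" using c by auto
  qed
  thus ?thesis by (rule finite_subset) auto
qed

lemma diagram_eq_Union: "diagram la = (\<Union>i<length la. {i} \<times> {..<la!i})"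
  by (auto simp: diagram_def)

lemma card_diagram: "card (diagram la) = sum_list la"
proof -
  have "card (diagram la) = (\<Sum>i<length la. card ({i} \<times> {..<la!i}))"
    unfolding diagram_eq_Union by (rule card_UN_disjoint) auto
  also have "\<dots> = (\<Sum>i<length la. la!i)" by (simp add: card_cartesian_product)
  also have "\<dots> = sum_list la" by (simp add: sum_list_sum_nth atLeast0LessThan)
  finally show ?thesis .
qed

lemma diagram_down:
  assumes "is_partition la" "(i,j) \<in> diagram la" "i' \<le> i" "j' \<le> j"
  shows "(i',j') \<in> diagram la"
proof -
  have "i < length la" "j < la!i" using assms(2) by (auto simp: diagram_def)
  moreover have "la!i \<le> la!i'" using part_mono[OF assms(1) assms(3)] \<open>i < length la\<close> by simp
  ultimately show ?thesis using assms(3,4) by (auto simp: diagram_def)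
qed

lemma conj_part_0: "is_partition la \<Longrightarrow> conj_part la 0 = length la"
  unfolding conj_part_def using part_pos by (metis (no_types, lifting) Collect_cong card_Collect_less_nat)

section \<open>Vandermonde-like products\<close>

definition dst :: "nat \<Rightarrow> nat \<Rightarrow> nat" where "dst a v = (if v < a then a - v else v - a)"

definition Dl :: "nat set \<Rightarrow> nat" where "Dl B = (\<Prod>u\<in>B. \<Prod>v\<in>{v\<in>B. v<u}. (u - v))"

definition PF :: "nat set \<Rightarrow> nat" where "PF B = (\<Prod>b\<in>B. fact b)"

lemma Dl_pos: "0 < Dl B"
  unfolding Dl_def by (rule prod_pos, rule prod_pos) auto

lemma Dl_empty[simp]: "Dl {} = 1" by (simp add: Dl_def)

lemma Dl_insert:
  assumes "finite S" "a \<notin> S"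
  shows "Dl (insert a S) = Dl S * (\<Prod>v\<in>S. dst a v)"
proof -
  have fS: "finite {v\<in>S. v<u}" for u using assms(1) by auto
  have A: "(\<Prod>v\<in>{v \<in> insert a S. v < u}. u - v) = (\<Prod>v\<in>{v\<in>S. v<u}. u - v) * (if a < u then u - a else 1)"
    if "u \<in> S" for u
  proof (cases "a < u")
    case True
    then have "{v \<in> insert a S. v < u} = insert a {v\<in>S. v<u}" by auto
    then show ?thesis using True assms fS by simp
  next
    case False
    then have "{v \<in> insert a S. v < u} = {v\<in>S. v<u}" by auto
    then show ?thesis using False by simp
  qed
  have "Dl (insert a S) = (\<Prod>v\<in>{v \<in> insert a S. v < a}. a - v) * (\<Prod>u\<in>S. \<Prod>v\<in>{v \<in> insert a S. v < u}. u - v)"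
    unfolding Dl_def using assms by simp
  also have "{v \<in> insert a S. v < a} = {v\<in>S. v<a}" by auto
  also have "(\<Prod>u\<in>S. \<Prod>v\<in>{v \<in> insert a S. v < u}. u - v) = Dl S * (\<Prod>u\<in>S. if a < u then u - a else 1)"
    unfolding Dl_def using A by (simp add: prod.distrib)
  also have "(\<Prod>u\<in>S. if a < u then u - a else 1) = (\<Prod>u\<in>{u\<in>S. a<u}. u - a)"
    using assms(1) by (simp add: prod.inter_filter)
  finally have "Dl (insert a S) = Dl S * ((\<Prod>v\<in>{v\<in>S. v<a}. a - v) * (\<Prod>u\<in>{u\<in>S. a<u}. u - a))"
    by (simp add: ac_simps)
  also have "(\<Prod>v\<in>{v\<in>S. v<a}. a - v) * (\<Prod>u\<in>{u\<in>S. a<u}. u - a) = (\<Prod>v\<in>S. dst a v)"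
  proof -
    have "S = {v\<in>S. v<a} \<union> {u\<in>S. a<u}" using assms(2) by auto (metis nat_neq_iff)
    then have "(\<Prod>v\<in>S. dst a v) = (\<Prod>v\<in>{v\<in>S. v<a} \<union> {u\<in>S. a<u}. dst a v)" by simp
    also have "\<dots> = (\<Prod>v\<in>{v\<in>S. v<a}. dst a v) * (\<Prod>v\<in>{u\<in>S. a<u}. dst a v)"
      by (rule prod.union_disjoint) (use assms(1) in auto)
    also have "\<dots> = (\<Prod>v\<in>{v\<in>S. v<a}. a - v) * (\<Prod>u\<in>{u\<in>S. a<u}. u - a)"
      by (intro arg_cong2[where f="(*)"] prod.cong) (auto simp: dst_def)
    finally show ?thesis by simp
  qed
  finally show ?thesis .
qed

lemma Dl_shift: "Dl ((+) s ` B) = Dl B"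
proof -
  have inj: "inj_on ((+) s) X" for X by (rule inj_onI) simp
  have "Dl ((+) s ` B) = (\<Prod>u\<in>B. \<Prod>v\<in>{v\<in>(+) s ` B. v < s + u}. (s + u - v))"
    unfolding Dl_def by (simp add: prod.reindex[OF inj])
  also have "\<dots> = (\<Prod>u\<in>B. \<Prod>v\<in>(+) s ` {v\<in>B. v < u}. (s + u - v))"
    by (intro prod.cong refl) auto
  also have "\<dots> = Dl B" unfolding Dl_def by (simp add: prod.reindex[OF inj])
  finally show ?thesis .
qed

lemma PF_insert: "finite S \<Longrightarrow> a \<notin> S \<Longrightarrow> PF (insert a S) = fact a * PF S"
  by (simp add: PF_def)

lemma PF_empty[simp]: "PF {} = 1" by (simp add: PF_def)

lemma PF_pos: "0 < PF B" unfolding PF_def by (rule prod_pos) simp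

definition HP :: "nat list \<Rightarrow> nat" where "HP la = (\<Prod>c\<in>diagram la. hook_length la c)"

definition beta :: "nat list \<Rightarrow> nat set" where
  "beta la = (\<lambda>i. la!i + length la - 1 - i) ` {..<length la}"

definition colrem :: "nat list \<Rightarrow> nat list" where
  "colrem la = map (\<lambda>a. a - 1) (takeWhile (\<lambda>a. 1 < a) la)"

lemma length_colrem: "length (colrem la) = length (takeWhile (\<lambda>a. 1 < a) la)"
  by (simp add: colrem_def)

lemma colrem_nth: "i < length (colrem la) \<Longrightarrow> colrem la ! i = la ! i - 1"
  by (simp add: colrem_def takeWhile_nth)

lemma length_colrem_le: "length (colrem la) \<le> length la"
  by (simp add: colrem_def length_takeWhile_le)

lemma colrem_less_iff:
  assumes "is_partition la" "i < length la"
  shows "i < length (colrem la) \<longleftrightarrow> 1 < la!i"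
proof
  assume "i < length (colrem la)"
  then have "i < length (takeWhile (\<lambda>a. 1 < a) la)" by (simp add: length_colrem)
  then have "takeWhile (\<lambda>a. 1 < a) la ! i \<in> set (takeWhile (\<lambda>a. 1 < a) la)" by (rule nth_mem)
  then have "1 < takeWhile (\<lambda>a. 1 < a) la ! i" by (rule set_takeWhileD[THEN conjunct2])
  thus "1 < la!i" using \<open>i < length (takeWhile _ la)\<close> by (simp add: takeWhile_nth)
next
  assume h: "1 < la!i"
  show "i < length (colrem la)"
  proof (rule ccontr)
    let ?t = "length (takeWhile (\<lambda>a. 1 < a) la)"
    assume "\<not> i < length (colrem la)"
    then have le: "?t \<le> i" by (simp add: length_colrem)
    then have lt: "?t < length la" using assms(2) by simp
    have "\<not> 1 < la ! ?t" using nth_length_takeWhile[of "\<lambda>a. 1 < a" la] lt by blast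
    moreover have "la!i \<le> la!?t" using part_mono[OF assms(1) le assms(2)] .
    ultimately show False using h by simp
  qed
qed

lemma colrem_partition:
  assumes "is_partition la" shows "is_partition (colrem la)"
  unfolding is_partition_iff
proof (intro conjI allI impI)
  fix i j assume ij: "i \<le> j" "j < length (colrem la)"
  have "j < length la" using ij(2) length_colrem_le by (meson order_less_le_trans)
  then show "colrem la ! j \<le> colrem la ! i"
    using ij part_mono[OF assms ij(1)] colrem_nth[of i la] colrem_nth[of j la] by simp
next
  fix i assume i: "i < length (colrem la)"
  then have "i < length la" using length_colrem_le by (meson order_less_le_trans)
  then show "0 < colrem la ! i" using colrem_less_iff[OF assms] i colrem_nth[OF i] by simp
qed

lemma conj_part_colrem:
  assumes "is_partition la"
  shows "conj_part (colrem la) j = conj_part la (Suc j)"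
proof -
  have "{i. i < length (colrem la) \<and> j < colrem la ! i} = {i. i < length la \<and> Suc j < la ! i}"
  proof (intro set_eqI iffI; clarify)
    fix i assume "i < length (colrem la)"
    moreover assume "j < colrem la ! i"
    ultimately show "i < length la \<and> Suc j < la ! i"
      using colrem_nth[of i la] length_colrem_le[of la] by simp
  next
    fix i assume "i < length la" "Suc j < la ! i"
    then have "i < length (colrem la)" using colrem_less_iff[OF assms] by simp
    then show "i < length (colrem la) \<and> j < colrem la ! i"
      using colrem_nth[of i la] \<open>Suc j < la ! i\<close> by simp
  qed
  thus ?thesis by (simp add: conj_part_def)
qed

lemma diagram_split:
  assumes "is_partition la"
  shows "diagram la = (\<lambda>i. (i,0)) ` {..<length la} \<union> (\<lambda>(i,j). (i, Suc j)) ` diagram (colrem la)"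
proof (intro set_eqI iffI)
  fix c assume c: "c \<in> diagram la"
  then obtain i j where ij: "c = (i,j)" "i < length la" "j < la!i" by (auto simp: diagram_def)
  show "c \<in> (\<lambda>i. (i,0)) ` {..<length la} \<union> (\<lambda>(i,j). (i, Suc j)) ` diagram (colrem la)"
  proof (cases j)
    case 0 then show ?thesis using ij by auto
  next
    case (Suc j')
    then have "i < length (colrem la)" using colrem_less_iff[OF assms ij(2)] ij by simp
    moreover have "j' < colrem la ! i" using colrem_nth[OF calculation] ij Suc by simp
    ultimately have "(i,j') \<in> diagram (colrem la)" by (simp add: diagram_def)
    then show ?thesis using ij Suc by force
  qed
next
  fix c assume "c \<in> (\<lambda>i. (i,0)) ` {..<length la} \<union> (\<lambda>(i,j). (i, Suc j)) ` diagram (colrem la)"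
  then show "c \<in> diagram la"
  proof
    assume "c \<in> (\<lambda>i. (i,0)) ` {..<length la}"
    then show ?thesis using part_pos[OF assms] by (auto simp: diagram_def)
  next
    assume "c \<in> (\<lambda>(i,j). (i, Suc j)) ` diagram (colrem la)"
    then obtain i j where ij: "c = (i, Suc j)" "i < length (colrem la)" "j < colrem la ! i"
      by (auto simp: diagram_def)
    have "i < length la" using ij(2) length_colrem_le[of la] by linarith
    moreover have "Suc j < la ! i" using ij colrem_nth[of i la] by simp
    ultimately show ?thesis using ij(1) by (simp add: diagram_def)
  qed
qed

lemma hook_col0:
  assumes "is_partition la" "i < length la"
  shows "hook_length la (i,0) = la!i + length la - 1 - i"
  using part_pos[OF assms] assms(2) by (simp add: hook_length_def conj_part_0[OF assms(1)])

lemma hook_shift: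
  assumes "is_partition la" "(i,j) \<in> diagram (colrem la)"
  shows "hook_length la (i, Suc j) = hook_length (colrem la) (i,j)"
proof -
  have "i < length (colrem la)" using assms(2) by (simp add: diagram_def)
  then show ?thesis by (simp add: hook_length_def conj_part_colrem[OF assms(1)] colrem_nth)
qed

lemma HP_split:
  assumes "is_partition la"
  shows "HP la = (\<Prod>i<length la. la!i + length la - 1 - i) * HP (colrem la)"
proof -
  have inj1: "inj_on (\<lambda>i. (i,0::nat)) X" for X by (rule inj_onI) simp
  have inj2: "inj_on (\<lambda>(i,j). (i, Suc j)) X" for X by (rule inj_onI) auto
  have fin: "finite (diagram (colrem la))" by (rule diagram_finite)
  have "HP la = (\<Prod>c\<in>(\<lambda>i. (i,0)) ` {..<length la}. hook_length la c) *
                (\<Prod>c\<in>(\<lambda>(i,j). (i, Suc j)) ` diagram (colrem la). hook_length la c)"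
    unfolding HP_def diagram_split[OF assms]
    by (rule prod.union_disjoint) (use fin in auto)
  also have "(\<Prod>c\<in>(\<lambda>i. (i,0)) ` {..<length la}. hook_length la c) = (\<Prod>i<length la. la!i + length la - 1 - i)"
    by (simp add: prod.reindex[OF inj1] hook_col0[OF assms])
  also have "(\<Prod>c\<in>(\<lambda>(i,j). (i, Suc j)) ` diagram (colrem la). hook_length la c) = HP (colrem la)"
    unfolding HP_def prod.reindex[OF inj2]
    by (rule prod.cong) (auto simp: hook_shift[OF assms])
  finally show ?thesis .
qed

lemma sum_colrem:
  assumes "is_partition la"
  shows "sum_list la = length la + sum_list (colrem la)"
proof -
  have inj1: "inj_on (\<lambda>i. (i,0::nat)) X" for X by (rule inj_onI) simp
  have inj2: "inj_on (\<lambda>(i,j). (i, Suc j)) X" for X by (rule inj_onI) auto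
  have "card (diagram la) = card ((\<lambda>i. (i,0::nat)) ` {..<length la}) + card ((\<lambda>(i,j). (i, Suc j)) ` diagram (colrem la))"
    unfolding diagram_split[OF assms] by (rule card_Un_disjoint) (use diagram_finite in auto)
  thus ?thesis by (simp add: card_image[OF inj1] card_image[OF inj2] card_diagram)
qed

lemma beta_inj:
  assumes "is_partition la"
  shows "inj_on (\<lambda>i. la!i + length la - 1 - i) {..<length la}"
proof (rule inj_onI)
  fix i j assume ij: "i \<in> {..<length la}" "j \<in> {..<length la}" "la!i + length la - 1 - i = la!j + length la - 1 - j"
  show "i = j"
  proof (rule ccontr)
    assume "i \<noteq> j"
    then consider "i < j" | "j < i" by linarith
    then show False
    proof cases
      case 1 then show False using part_mono[OF assms, of i j] ij by simp
    next
      case 2 then show False using part_mono[OF assms, of j i] ij by simp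
    qed
  qed
qed

lemma finite_beta: "finite (beta la)" by (simp add: beta_def)

lemma prod_beta:
  assumes "is_partition la"
  shows "(\<Prod>i<length la. la!i + length la - 1 - i) = (\<Prod>b\<in>beta la. b)"
proof -
  have "(\<Prod>b\<in>beta la. b) = (\<Prod>i<length la. (\<lambda>b. b) (la!i + length la - 1 - i))"
    unfolding beta_def by (rule prod.reindex_cong[OF beta_inj[OF assms] refl refl])
  then show ?thesis by simp
qed

lemma beta_colrem:
  assumes "is_partition la"
  defines "s \<equiv> length la - length (colrem la)"
  shows "beta la = Suc ` ((\<lambda>b. b + s) ` beta (colrem la) \<union> {..<s})"
proof -
  let ?L = "length la" and ?L' = "length (colrem la)"
  have LL: "?L' \<le> ?L" by (rule length_colrem_le)
  have A: "beta la = (\<lambda>i. la!i + ?L - 1 - i) ` {..<?L'} \<union> (\<lambda>i. la!i + ?L - 1 - i) ` {?L'..<?L}"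
  proof -
    have "{..<?L} = {..<?L'} \<union> {?L'..<?L}" using LL by auto
    then show ?thesis unfolding beta_def by (simp only: image_Un)
  qed
  have B: "(\<lambda>i. la!i + ?L - 1 - i) ` {..<?L'} = Suc ` (\<lambda>b. b + s) ` beta (colrem la)"
  proof -
    have "(\<lambda>i. la!i + ?L - 1 - i) ` {..<?L'} = (\<lambda>i. Suc (colrem la ! i + ?L' - 1 - i + s)) ` {..<?L'}"
    proof (rule image_cong[OF refl])
      fix i assume i: "i \<in> {..<?L'}"
      then have "i < ?L" using LL by simp
      then have "1 < la!i" using colrem_less_iff[OF assms(1)] i by simp
      then show "la!i + ?L - 1 - i = Suc (colrem la ! i + ?L' - 1 - i + s)"
        using colrem_nth[of i la] i LL unfolding s_def by simp
    qed
    also have "\<dots> = Suc ` (\<lambda>b. b + s) ` beta (colrem la)" unfolding beta_def by (simp add: image_image)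
    finally show ?thesis .
  qed
  have C: "(\<lambda>i. la!i + ?L - 1 - i) ` {?L'..<?L} = Suc ` {..<s}"
  proof -
    have "(\<lambda>i. la!i + ?L - 1 - i) ` {?L'..<?L} = (\<lambda>i. Suc (?L - 1 - i)) ` {?L'..<?L}"
    proof (rule image_cong[OF refl])
      fix i assume i: "i \<in> {?L'..<?L}"
      then have "\<not> 1 < la!i" using colrem_less_iff[OF assms(1), of i] by simp
      moreover have "0 < la!i" using part_pos[OF assms(1)] i by simp
      ultimately have "la!i = 1" by simp
      then show "la!i + ?L - 1 - i = Suc (?L - 1 - i)" using i by simp arith
    qed
    also have "(\<lambda>i. ?L - 1 - i) ` {?L'..<?L} = {..<s}"
    proof (intro set_eqI iffI)
      fix t assume "t \<in> (\<lambda>i. ?L - 1 - i) ` {?L'..<?L}"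
      then show "t \<in> {..<s}" unfolding s_def by auto
    next
      fix t assume "t \<in> {..<s}"
      then have "?L - 1 - t \<in> {?L'..<?L}" "t = ?L - 1 - (?L - 1 - t)" unfolding s_def by auto
      then show "t \<in> (\<lambda>i. ?L - 1 - i) ` {?L'..<?L}" by blast
    qed
    then have "(\<lambda>i. Suc (?L - 1 - i)) ` {?L'..<?L} = Suc ` {..<s}" by (metis image_image)
    finally show ?thesis .
  qed
  show ?thesis unfolding A B C by (simp add: image_Un)
qed

lemma shift1:
  assumes "finite C"
  shows "PF (insert 0 (Suc ` C)) * Dl C = PF C * Dl (insert 0 (Suc ` C))"
proof -
  have inj: "inj_on Suc C" by simp
  have n0: "0 \<notin> Suc ` C" by auto
  have "PF (insert 0 (Suc ` C)) = (\<Prod>c\<in>C. Suc c) * PF C"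
    using assms n0 by (simp add: PF_insert PF_def prod.reindex[OF inj] prod.distrib[symmetric])
  moreover have "Dl (insert 0 (Suc ` C)) = Dl C * (\<Prod>c\<in>C. Suc c)"
  proof -
    have "Suc ` C = (+) 1 ` C" by auto
    then have "Dl (Suc ` C) = Dl C" using Dl_shift by metis
    then show ?thesis using assms n0 by (simp add: Dl_insert prod.reindex[OF inj] dst_def)
  qed
  ultimately show ?thesis by simp
qed

lemma shift_s:
  assumes "finite B"
  shows "PF ((\<lambda>b. b + s) ` B \<union> {..<s}) * Dl B = PF B * Dl ((\<lambda>b. b + s) ` B \<union> {..<s})"
proof (induction s)
  case 0 then show ?case by simp
next
  case (Suc s)
  let ?C = "(\<lambda>b. b + s) ` B \<union> {..<s}"
  have eq: "(\<lambda>b. b + Suc s) ` B \<union> {..<Suc s} = insert 0 (Suc ` ?C)"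
  proof (intro set_eqI iffI)
    fix x assume "x \<in> (\<lambda>b. b + Suc s) ` B \<union> {..<Suc s}"
    then show "x \<in> insert 0 (Suc ` ?C)"
    proof
      assume "x \<in> (\<lambda>b. b + Suc s) ` B"
      then obtain b where "b \<in> B" "x = Suc (b + s)" by auto
      then show ?thesis by blast
    next
      assume x: "x \<in> {..<Suc s}"
      show ?thesis
      proof (cases x)
        case 0 then show ?thesis by simp
      next
        case (Suc x') then have "x' \<in> {..<s}" using x by simp
        then show ?thesis using Suc by blast
      qed
    qed
  qed auto
  have fC: "finite ?C" using assms by simp
  have h1: "PF (insert 0 (Suc ` ?C)) * Dl ?C = PF ?C * Dl (insert 0 (Suc ` ?C))" by (rule shift1[OF fC])
  have "PF (insert 0 (Suc ` ?C)) * Dl B * Dl ?C = PF B * Dl (insert 0 (Suc ` ?C)) * Dl ?C"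
  proof -
    have "PF (insert 0 (Suc ` ?C)) * Dl B * Dl ?C = (PF (insert 0 (Suc ` ?C)) * Dl ?C) * Dl B" by simp
    also have "\<dots> = PF ?C * Dl B * Dl (insert 0 (Suc ` ?C))" using h1 by simp
    also have "\<dots> = PF B * Dl ?C * Dl (insert 0 (Suc ` ?C))" using Suc.IH by simp
    finally show ?thesis by (simp only: ac_simps)
  qed
  then have "PF (insert 0 (Suc ` ?C)) * Dl B = PF B * Dl (insert 0 (Suc ` ?C))"
    using Dl_pos[of ?C] mult_right_cancel[of "Dl ?C"] by (metis less_not_refl2)
  then show ?case by (simp only: eq)
qed

theorem HP_beta:
  assumes "is_partition la"
  shows "HP la * Dl (beta la) = PF (beta la)"
  using assms
proof (induction "sum_list la" arbitrary: la rule: less_induct)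
  case less
  show ?case
  proof (cases "la = []")
    case True
    then show ?thesis by (simp add: HP_def diagram_def beta_def)
  next
    case False
    let ?c = "colrem la"
    define s where "s = length la - length ?c"
    let ?C = "(\<lambda>b. b + s) ` beta ?c \<union> {..<s}"
    have pc: "is_partition ?c" by (rule colrem_partition[OF less.prems])
    have "sum_list ?c < sum_list la" using sum_colrem[OF less.prems] False by simp
    then have IH: "HP ?c * Dl (beta ?c) = PF (beta ?c)" using less.hyps pc by blast
    have bl: "beta la = Suc ` ?C" unfolding s_def by (rule beta_colrem[OF less.prems])
    have fC: "finite ?C" by (simp add: finite_beta)
    have injS: "inj_on Suc ?C" by simp
    have PFb: "PF (beta la) = (\<Prod>b\<in>beta la. b) * PF ?C"
      unfolding bl PF_def prod.reindex[OF injS] by (simp add: prod.distrib[symmetric])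
    have Dlb: "Dl (beta la) = Dl ?C"
    proof -
      have "Suc ` ?C = (+) 1 ` ?C" by auto
      then show ?thesis unfolding bl by (metis Dl_shift)
    qed
    have HPl: "HP la = (\<Prod>b\<in>beta la. b) * HP ?c"
      using HP_split[OF less.prems] prod_beta[OF less.prems] by simp
    have SH: "PF ?C * Dl (beta ?c) = PF (beta ?c) * Dl ?C" by (rule shift_s[OF finite_beta])
    have "HP la * Dl (beta la) * Dl (beta ?c) = PF (beta la) * Dl (beta ?c)"
    proof -
      have "HP la * Dl (beta la) * Dl (beta ?c) = (\<Prod>b\<in>beta la. b) * (HP ?c * Dl (beta ?c)) * Dl ?C"
        using HPl Dlb by simp
      also have "\<dots> = (\<Prod>b\<in>beta la. b) * (PF (beta ?c) * Dl ?C)" using IH by simp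
      also have "\<dots> = (\<Prod>b\<in>beta la. b) * (PF ?C * Dl (beta ?c))" using SH by simp
      also have "\<dots> = PF (beta la) * Dl (beta ?c)" using PFb by simp
      finally show ?thesis .
    qed
    then show ?thesis using Dl_pos[of "beta ?c"] by simp
  qed
qed

section \<open>A partial-fraction identity\<close>

definition pl :: "real set \<Rightarrow> (real \<Rightarrow> real) \<Rightarrow> real poly" where
  "pl S f = (\<Prod>u\<in>S. [:- f u, 1:])"

definition e2 :: "real set \<Rightarrow> (real \<Rightarrow> real) \<Rightarrow> real" where
  "e2 S f = ((\<Sum>u\<in>S. f u)^2 - (\<Sum>u\<in>S. (f u)^2)) / 2"

lemma coeff_lin_mult0: "coeff ([:-c, 1:] * P) 0 = - c * coeff P 0" for c :: real
  by simp

lemma coeff_lin_multS: "coeff ([:-c, 1:] * P) (Suc m) = coeff P m - c * coeff P (Suc m)" for c :: real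
  by (simp add: algebra_simps)

lemma e2_insert:
  assumes "finite S" "a \<notin> S"
  shows "e2 (insert a S) f = e2 S f + f a * (\<Sum>u\<in>S. f u)"
  using assms by (simp add: e2_def power2_eq_square field_simps)

lemma coeff_pl:
  assumes "finite S"
  shows "coeff (pl S f) (card S) = 1 \<and> (\<forall>j. coeff (pl S f) (card S + Suc j) = 0) \<and>
         (1 \<le> card S \<longrightarrow> coeff (pl S f) (card S - 1) = - (\<Sum>u\<in>S. f u)) \<and>
         (2 \<le> card S \<longrightarrow> coeff (pl S f) (card S - 2) = e2 S f)"
  using assms
proof (induction S rule: finite_induct)
  case empty
  then show ?case by (simp add: pl_def coeff_pCons split: nat.splits)
next
  case (insert a S)
  let ?P = "pl S f"
  have eq: "pl (insert a S) f = [:- f a, 1:] * ?P" using insert by (simp add: pl_def)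
  have cS: "card (insert a S) = Suc (card S)" using insert by simp
  note IH = insert.IH
  have c1: "coeff (pl (insert a S) f) (card (insert a S)) = 1"
    unfolding eq cS coeff_lin_multS using IH[THEN conjunct2, THEN conjunct1, rule_format, of 0] IH by simp
  have c2: "coeff (pl (insert a S) f) (card (insert a S) + Suc j) = 0" for j
    unfolding eq cS using IH[THEN conjunct2, THEN conjunct1, rule_format, of j]
      IH[THEN conjunct2, THEN conjunct1, rule_format, of "Suc j"]
    by (simp del: mult_pCons_left add: coeff_lin_multS[of _ _ "card S + Suc j", simplified] )
  have c3: "coeff (pl (insert a S) f) (card (insert a S) - 1) = - (\<Sum>u\<in>insert a S. f u)"
  proof (cases "card S")
    case 0
    then have "S = {}" using insert.hyps(1) by simp
    then show ?thesis using insert by (simp add: pl_def)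
  next
    case (Suc m)
    have "coeff (pl (insert a S) f) (card (insert a S) - 1) = coeff ([:- f a, 1:] * ?P) (Suc m)"
      unfolding eq cS Suc by simp
    also have "\<dots> = coeff ?P m - f a * coeff ?P (Suc m)" by (rule coeff_lin_multS)
    also have "\<dots> = - (\<Sum>u\<in>S. f u) - f a" using IH Suc by simp
    finally show ?thesis using insert by simp
  qed
  have c4: "coeff (pl (insert a S) f) (card (insert a S) - 2) = e2 (insert a S) f"
    if "2 \<le> card (insert a S)"
  proof (cases "card S")
    case 0 then show ?thesis using that cS by simp
  next
    case (Suc m)
    show ?thesis
    proof (cases m)
      case 0
      then obtain s where S: "S = {s}" using Suc card_1_singletonE by auto
      then show ?thesis using insert by (simp add: pl_def e2_def power2_eq_square algebra_simps)
    next
      case (Suc m')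
      have "coeff (pl (insert a S) f) (card (insert a S) - 2) = coeff ([:- f a, 1:] * ?P) (Suc m')"
        unfolding eq cS using \<open>card S = Suc m\<close> Suc by simp
      also have "\<dots> = coeff ?P m' - f a * coeff ?P (Suc m')" by (rule coeff_lin_multS)
      also have "\<dots> = e2 S f + f a * (\<Sum>u\<in>S. f u)"
        using IH \<open>card S = Suc m\<close> Suc by simp
      finally show ?thesis using e2_insert[OF insert.hyps] by simp
    qed
  qed
  show ?case using c1 c2 c3 c4 by blast
qed

lemma real_tri: "real (\<Sum>i<L. i) = real L * (real L - 1) / 2"
  by (induction L) (simp_all add: field_simps)

lemma key_real:
  fixes B :: "real set"
  assumes "finite B"
  shows "(\<Sum>b\<in>B. b * (\<Prod>u\<in>B-{b}. (b-1-u)/(b-u))) = (\<Sum>b\<in>B. b) - real (card B) * (real (card B) - 1) / 2"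
proof (cases "card B \<ge> 2")
  case False
  then consider "card B = 0" | "card B = 1" by linarith
  then show ?thesis
  proof cases
    case 1 then have "B = {}" using assms by simp
    then show ?thesis by simp
  next
    case 2 then obtain b where "B = {b}" using card_1_singletonE by blast
    then show ?thesis by simp
  qed
next
  case True
  define L where "L = card B"
  define A where "A b = (\<Prod>u\<in>B-{b}. (b-1-u)/(b-u))" for b
  define P where "P = (\<Sum>b\<in>B. smult (A b) (pl (B-{b}) id)) - pl B id + pl B (\<lambda>u. u + 1)"
  have cardB: "card (B - {b}) = L - 1" if "b \<in> B" for b using that assms unfolding L_def by simp
  have roots: "poly P c = 0" if c: "c \<in> B" for c
  proof -
    have "poly (\<Sum>b\<in>B. smult (A b) (pl (B-{b}) id)) c = (\<Sum>b\<in>B. A b * (\<Prod>u\<in>B-{b}. c - u))"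
      by (simp add: poly_sum pl_def poly_prod)
    also have "\<dots> = A c * (\<Prod>u\<in>B-{c}. c - u)"
    proof (rule sum.remove[OF assms c, THEN trans])
      have "(\<Prod>u\<in>B-{b}. c - u) = 0" if "b \<in> B - {c}" for b
        using that c assms by (intro prod_zero) auto
      then show "A c * (\<Prod>u\<in>B - {c}. c - u) + (\<Sum>b\<in>B - {c}. A b * (\<Prod>u\<in>B - {b}. c - u)) =
                 A c * (\<Prod>u\<in>B - {c}. c - u)" by simp
    qed
    also have "\<dots> = (\<Prod>u\<in>B-{c}. c - 1 - u)"
      unfolding A_def prod.distrib[symmetric] by (rule prod.cong) auto
    finally have t1: "poly (\<Sum>b\<in>B. smult (A b) (pl (B-{b}) id)) c = (\<Prod>u\<in>B-{c}. c - 1 - u)" .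
    have t2: "poly (pl B id) c = 0" using c assms by (simp add: pl_def poly_prod)
    have "poly (pl B (\<lambda>u. u + 1)) c = (\<Prod>u\<in>B. c - (u + 1))" by (auto simp: pl_def poly_prod intro!: prod.cong)
    also have "\<dots> = (c - (c+1)) * (\<Prod>u\<in>B-{c}. c - (u + 1))" by (rule prod.remove[OF assms c])
    finally have t3: "poly (pl B (\<lambda>u. u + 1)) c = - (\<Prod>u\<in>B-{c}. c - 1 - u)" by (simp add: algebra_simps)
    show ?thesis unfolding P_def using t1 t2 t3 by simp
  qed
  have cP: "coeff P i = (\<Sum>b\<in>B. A b * coeff (pl (B-{b}) id) i) - coeff (pl B id) i + coeff (pl B (\<lambda>u. u+1)) i" for i
    unfolding P_def by (simp add: coeff_sum)
  have cl_all: "coeff (pl S f) (card S + Suc j) = 0" if "finite S" for S f j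
    using coeff_pl[OF that] by blast
  have degP: "degree P < L"
  proof -
    have "degree P \<le> L - 1"
    proof (rule degree_le, intro allI impI)
      fix i assume i: "L - 1 < i"
      have z1: "coeff (pl (B-{b}) id) i = 0" if "b \<in> B" for b
      proof -
        have "i = card (B - {b}) + Suc (i - L)" using i cardB[OF that] True unfolding L_def by simp
        then show ?thesis using cl_all[of "B-{b}" id "i - L"] assms by simp
      qed
      show "coeff P i = 0"
      proof (cases "i = L")
        case True
        have "coeff (pl B f) i = 1" for f using coeff_pl[OF assms] True unfolding L_def by blast
        then show ?thesis unfolding cP using z1 by simp
      next
        case False
        then have "i = card B + Suc (i - L - 1)" using i unfolding L_def by simp
        then have "coeff (pl B f) i = 0" for f using cl_all[OF assms, of f "i - L - 1"] by simp
        then show ?thesis unfolding cP using z1 by simp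
      qed
    qed
    then show ?thesis using True unfolding L_def by simp
  qed
  have P0: "P = 0"
    by (rule poly_eqI_degree[of B]) (use roots degP True in \<open>auto simp: L_def\<close>)
  have sA: "(\<Sum>b\<in>B. A b) = real L"
  proof -
    have "coeff P (L - 1) = 0" using P0 by simp
    moreover have "coeff (pl (B-{b}) id) (L - 1) = 1" if "b \<in> B" for b
      using coeff_pl[of "B-{b}" id] assms cardB[OF that] by simp
    moreover have "coeff (pl B f) (L - 1) = - (\<Sum>u\<in>B. f u)" for f
      using coeff_pl[OF assms, of f] True unfolding L_def by simp
    ultimately have "(\<Sum>b\<in>B. A b) + (\<Sum>u\<in>B. u) - (\<Sum>u\<in>B. u + 1) = 0"
      unfolding cP by simp
    then show ?thesis using assms by (simp add: sum.distrib L_def)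
  qed
  have "coeff P (L - 2) = 0" using P0 by simp
  moreover have "coeff (pl (B-{b}) id) (L - 2) = - ((\<Sum>u\<in>B. u) - b)" if "b \<in> B" for b
  proof -
    have "L - 2 = card (B - {b}) - 1" using cardB[OF that] by simp
    moreover have "1 \<le> card (B - {b})" using cardB[OF that] True unfolding L_def by simp
    ultimately have "coeff (pl (B-{b}) id) (L - 2) = - (\<Sum>u\<in>B-{b}. u)"
      using coeff_pl[of "B-{b}" id] assms by simp
    also have "(\<Sum>u\<in>B-{b}. u) = (\<Sum>u\<in>B. u) - b" using sum_diff1[OF assms, of id b] that by simp
    finally show ?thesis .
  qed
  moreover have "coeff (pl B f) (L - 2) = e2 B f" for f
    using coeff_pl[OF assms, of f] True unfolding L_def by simp
  ultimately have eq: "(\<Sum>b\<in>B. A b * (b - (\<Sum>u\<in>B. u))) - e2 B id + e2 B (\<lambda>u. u + 1) = 0"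
    unfolding cP by (simp add: algebra_simps)
  have e2d: "e2 B (\<lambda>u. u + 1) - e2 B id = (\<Sum>u\<in>B. u) * (real L - 1) + real L * (real L - 1) / 2"
  proof -
    have s1: "(\<Sum>u\<in>B. u + 1) = (\<Sum>u\<in>B. u) + real L" using assms by (simp add: sum.distrib L_def)
    have s2: "(\<Sum>u\<in>B. (u + 1)^2) = (\<Sum>u\<in>B. u^2) + 2 * (\<Sum>u\<in>B. u) + real L"
      using assms by (simp add: power2_eq_square algebra_simps sum.distrib sum_distrib_left L_def)
    show ?thesis unfolding e2_def s1 s2 by (simp add: power2_eq_square field_simps)
  qed
  have "(\<Sum>b\<in>B. A b * (b - (\<Sum>u\<in>B. u))) = (\<Sum>b\<in>B. b * A b) - (\<Sum>u\<in>B. u) * real L"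
    using sA by (simp add: algebra_simps sum_subtractf sum_distrib_left[symmetric] sum_distrib_right[symmetric])
  then have "(\<Sum>b\<in>B. b * A b) = (\<Sum>u\<in>B. u) - real L * (real L - 1) / 2"
    using eq e2d by (simp add: algebra_simps)
  then show ?thesis unfolding A_def L_def .
qed

lemma sum_ge_tri:
  "finite B \<Longrightarrow> card B = n \<Longrightarrow> (\<Sum>i<n. i) \<le> (\<Sum>b\<in>B. b) \<and> ((\<Sum>b\<in>B. b) = (\<Sum>i<n. i) \<longrightarrow> B = {..<n})"
proof (induction n arbitrary: B)
  case 0
  then have "B = {}" by simp
  then show ?case by simp
next
  case (Suc n)
  have ne: "B \<noteq> {}" using Suc.prems by auto
  define m where "m = Max B"
  have mB: "m \<in> B" unfolding m_def using Suc.prems ne by simp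
  have le: "b \<le> m" if "b \<in> B" for b unfolding m_def using Suc.prems that by simp
  have "B \<subseteq> {..m}" using le by auto
  then have "card B \<le> card {..m}" by (rule card_mono[rotated]) simp
  then have nm: "n \<le> m" using Suc.prems by simp
  have fB': "finite (B - {m})" using Suc.prems by simp
  have cB': "card (B - {m}) = n" using Suc.prems mB by simp
  have IH1: "(\<Sum>i<n. i) \<le> (\<Sum>b\<in>B-{m}. b)" using Suc.IH[OF fB' cB'] by blast
  have IH2: "(\<Sum>b\<in>B-{m}. b) = (\<Sum>i<n. i) \<Longrightarrow> B - {m} = {..<n}" using Suc.IH[OF fB' cB'] by blast
  have sB: "(\<Sum>b\<in>B. b) = m + (\<Sum>b\<in>B-{m}. b)" using sum.remove[OF Suc.prems(1) mB] by simp
  have sS: "(\<Sum>i<Suc n. i) = n + (\<Sum>i<n. i)" by simp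
  have t1: "(\<Sum>i<Suc n. i) \<le> (\<Sum>b\<in>B. b)" using IH1 nm sB sS by linarith
  moreover have "B = {..<Suc n}" if eq: "(\<Sum>b\<in>B. b) = (\<Sum>i<Suc n. i)"
  proof -
    have mn: "m = n" using eq IH1 nm sB sS by linarith
    have "(\<Sum>b\<in>B-{m}. b) = (\<Sum>i<n. i)" using eq IH1 nm sB sS by linarith
    then have "B - {m} = {..<n}" by (rule IH2)
    then have "B = insert m {..<n}" using mB by blast
    then show ?thesis using mn by (simp add: lessThan_Suc)
  qed
  ultimately show ?case by blast
qed

lemma dst_ratio:
  assumes "v \<noteq> b" "v \<noteq> b - 1" "0 < b"
  shows "real (dst (b-1) v) = real (dst b v) * ((real b - 1 - real v) / (real b - real v))"
proof (cases "v < b")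
  case True
  then have "v < b - 1" using assms by simp
  then have 1: "real (dst (b-1) v) = real b - 1 - real v" by (simp add: dst_def of_nat_diff)
  have 2: "real (dst b v) = real b - real v" using True by (simp add: dst_def of_nat_diff)
  have "real b - real v \<noteq> 0" using True by simp
  then show ?thesis unfolding 1 2 by simp
next
  case False
  then have bv: "b < v" using assms by simp
  then have "dst (b-1) v = v - b + 1" using assms(3) by (auto simp: dst_def Suc_diff_le)
  then have 1: "real (dst (b-1) v) = real v - real b + 1" using bv by (simp add: of_nat_diff)
  have 2: "real (dst b v) = real v - real b" using bv by (simp add: dst_def of_nat_diff)
  have ne: "real v - real b \<noteq> 0" using bv by simp
  have ne2: "real b - real v \<noteq> 0" using bv by simp
  have "(real b - 1 - real v) / (real b - real v) = (real v - real b + 1) / (real v - real b)"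
    by (subst frac_eq_eq[OF ne2 ne]) (simp add: algebra_simps)
  then show ?thesis unfolding 1 2 using ne by simp
qed

lemma key_nat:
  assumes fB: "finite B"
  defines "G \<equiv> {b\<in>B. 0 < b \<and> b - 1 \<notin> B}"
  shows "((\<Sum>b\<in>B. b) - (\<Sum>i<card B. i)) * Dl B = (\<Sum>b\<in>G. b * Dl (insert (b - 1) (B - {b})))"
proof -
  define A where "A b = (\<Prod>v\<in>B-{b}. (real b - 1 - real v)/(real b - real v))" for b
  have inj: "inj_on real X" for X by (rule inj_onI) simp
  have kr: "(\<Sum>b\<in>B. real b * A b) = real (\<Sum>b\<in>B. b) - real (card B) * (real (card B) - 1) / 2"
  proof -
    have "(\<Sum>x\<in>real ` B. x * (\<Prod>u\<in>real ` B - {x}. (x-1-u)/(x-u))) =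
          (\<Sum>x\<in>real ` B. x) - real (card (real ` B)) * (real (card (real ` B)) - 1) / 2"
      by (rule key_real) (use fB in simp)
    moreover have "(\<Sum>x\<in>real ` B. x * (\<Prod>u\<in>real ` B - {x}. (x-1-u)/(x-u))) = (\<Sum>b\<in>B. real b * A b)"
    proof -
      have "real ` B - {real b} = real ` (B - {b})" for b by auto
      then show ?thesis unfolding A_def sum.reindex[OF inj] by (simp add: prod.reindex[OF inj])
    qed
    moreover have "card (real ` B) = card B" by (simp add: card_image[OF inj])
    moreover have "(\<Sum>x\<in>real ` B. x) = real (\<Sum>b\<in>B. b)" by (simp add: sum.reindex[OF inj])
    ultimately show ?thesis by simp
  qed
  have zero: "real b * A b = 0" if "b \<in> B - G" for b
  proof (cases "b = 0")
    case False
    then have "b - 1 \<in> B" "b - 1 \<in> B - {b}" using that unfolding G_def by auto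
    have "(real b - 1 - real (b-1))/(real b - real (b-1)) = 0" using False by (simp add: of_nat_diff)
    note z = this
    have "A b = 0" unfolding A_def
    proof (rule prod_zero)
      show "finite (B - {b})" using fB by simp
      show "\<exists>v\<in>B - {b}. (real b - 1 - real v)/(real b - real v) = 0"
        using \<open>b - 1 \<in> B - {b}\<close> z by blast
    qed
    then show ?thesis by simp
  qed simp
  have good: "real b * real (Dl (insert (b - 1) (B - {b}))) = real b * A b * real (Dl B)" if "b \<in> G" for b
  proof -
    have bB: "b \<in> B" "0 < b" "b - 1 \<notin> B" using that unfolding G_def by auto
    have f: "finite (B - {b})" using fB by simp
    have "Dl B = Dl (insert b (B - {b}))" using bB by (simp add: insert_absorb)
    also have "\<dots> = Dl (B - {b}) * (\<Prod>v\<in>B-{b}. dst b v)" by (rule Dl_insert[OF f]) simp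
    finally have D1: "Dl B = Dl (B - {b}) * (\<Prod>v\<in>B-{b}. dst b v)" .
    have D2: "Dl (insert (b - 1) (B - {b})) = Dl (B - {b}) * (\<Prod>v\<in>B-{b}. dst (b-1) v)"
      by (rule Dl_insert[OF f]) (use bB in auto)
    have "real (\<Prod>v\<in>B-{b}. dst (b-1) v) = (\<Prod>v\<in>B-{b}. real (dst b v) * ((real b - 1 - real v) / (real b - real v)))"
      unfolding of_nat_prod by (rule prod.cong[OF refl], rule dst_ratio) (use bB in auto)
    also have "\<dots> = real (\<Prod>v\<in>B-{b}. dst b v) * A b" unfolding A_def of_nat_prod by (rule prod.distrib)
    finally show ?thesis unfolding D2 using D1 by simp
  qed
  have GB: "G \<subseteq> B" unfolding G_def by auto
  have "real (\<Sum>b\<in>B. b) - real (card B) * (real (card B) - 1) / 2 = (\<Sum>b\<in>G. real b * A b)"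
    unfolding kr[symmetric] by (rule sum.mono_neutral_right[OF fB GB]) (use zero in auto)
  then have "(real (\<Sum>b\<in>B. b) - real (card B) * (real (card B) - 1) / 2) * real (Dl B) =
             (\<Sum>b\<in>G. real b * A b * real (Dl B))"
    by (simp add: sum_distrib_right)
  also have "\<dots> = (\<Sum>b\<in>G. real b * real (Dl (insert (b - 1) (B - {b}))))"
    by (rule sum.cong[OF refl], rule good[symmetric])
  also have "\<dots> = real (\<Sum>b\<in>G. b * Dl (insert (b - 1) (B - {b})))" by simp
  finally have "(real (\<Sum>b\<in>B. b) - real (card B) * (real (card B) - 1) / 2) * real (Dl B) =
             real (\<Sum>b\<in>G. b * Dl (insert (b - 1) (B - {b})))" .
  moreover have "real (\<Sum>b\<in>B. b) - real (card B) * (real (card B) - 1) / 2 = real ((\<Sum>b\<in>B. b) - (\<Sum>i<card B. i))"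
    using sum_ge_tri[OF fB refl] real_tri[of "card B"] by (simp add: of_nat_diff)
  ultimately have "real (((\<Sum>b\<in>B. b) - (\<Sum>i<card B. i)) * Dl B) = real (\<Sum>b\<in>G. b * Dl (insert (b - 1) (B - {b})))"
    by (simp only: of_nat_mult)
  then show ?thesis by (simp only: of_nat_eq_iff)
qed

lemma prod_diff_fact: "(\<Prod>v<u. u - v) = fact u"
proof (induction u)
  case 0 then show ?case by simp
next
  case (Suc u)
  have "(\<Prod>v<Suc u. Suc u - v) = (Suc u - 0) * (\<Prod>v<u. Suc u - Suc v)" by (rule prod.lessThan_Suc_shift)
  also have "(\<Prod>v<u. Suc u - Suc v) = (\<Prod>v<u. u - v)" by simp
  finally show ?case using Suc.IH by simp
qed

lemma Dl_lessThan: "Dl {..<L} = PF {..<L}"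
  unfolding Dl_def PF_def
proof (rule prod.cong[OF refl])
  fix u assume "u \<in> {..<L}"
  then have "{v \<in> {..<L}. v < u} = {..<u}" by auto
  then show "(\<Prod>v\<in>{v \<in> {..<L}. v < u}. u - v) = fact u" using prod_diff_fact by simp
qed

theorem PF_dvd:
  assumes "finite B"
  shows "PF B dvd fact ((\<Sum>b\<in>B. b) - (\<Sum>i<card B. i)) * Dl B"
  using assms
proof (induction "\<Sum>b\<in>B. b" arbitrary: B rule: less_induct)
  case less
  define n where "n = (\<Sum>b\<in>B. b) - (\<Sum>i<card B. i)"
  note sg = sum_ge_tri[OF less.prems refl]
  show ?case
  proof (cases "n = 0")
    case True
    then have "B = {..<card B}" using sg unfolding n_def by simp
    then have "Dl B = PF B" using Dl_lessThan by metis
    then show ?thesis using True unfolding n_def by simp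
  next
    case False
    define G where "G = {b\<in>B. 0 < b \<and> b - 1 \<notin> B}"
    have kn: "n * Dl B = (\<Sum>b\<in>G. b * Dl (insert (b - 1) (B - {b})))"
      unfolding n_def G_def by (rule key_nat[OF less.prems])
    have "fact n * Dl B = fact (n - 1) * (n * Dl B)"
    proof -
      have "fact n = n * fact (n - 1)" using False by (simp add: fact_reduce)
      then show ?thesis by simp
    qed
    also have "\<dots> = (\<Sum>b\<in>G. b * (fact (n - 1) * Dl (insert (b - 1) (B - {b}))))"
      unfolding kn by (simp add: sum_distrib_left algebra_simps)
    finally have eq: "fact n * Dl B = (\<Sum>b\<in>G. b * (fact (n - 1) * Dl (insert (b - 1) (B - {b}))))" .
    have "PF B dvd b * (fact (n - 1) * Dl (insert (b - 1) (B - {b})))" if bG: "b \<in> G" for b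
    proof -
      have bB: "b \<in> B" "0 < b" "b - 1 \<notin> B" using bG unfolding G_def by auto
      let ?Bb = "insert (b - 1) (B - {b})"
      have f: "finite (B - {b})" using less.prems by simp
      have nb: "b - 1 \<notin> B - {b}" using bB by simp
      have "0 < card B" using less.prems bB(1) card_gt_0_iff by blast
      then have cB: "card ?Bb = card B" using f nb bB less.prems by simp
      have sBb: "(\<Sum>x\<in>?Bb. x) = (\<Sum>x\<in>B. x) - 1"
      proof -
        have "(\<Sum>x\<in>?Bb. x) = (b - 1) + (\<Sum>x\<in>B-{b}. x)" using f nb by simp
        moreover have "(\<Sum>x\<in>B. x) = b + (\<Sum>x\<in>B-{b}. x)" using sum.remove[OF less.prems bB(1)] by simp
        ultimately show ?thesis using bB by simp
      qed
      have lt: "(\<Sum>x\<in>?Bb. x) < (\<Sum>x\<in>B. x)" using sBb False unfolding n_def by simp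
      have IH: "PF ?Bb dvd fact ((\<Sum>x\<in>?Bb. x) - (\<Sum>i<card ?Bb. i)) * Dl ?Bb"
        using less.hyps[OF lt] f by simp
      have "(\<Sum>x\<in>?Bb. x) - (\<Sum>i<card ?Bb. i) = n - 1" unfolding cB sBb n_def by simp
      then have IH': "PF ?Bb dvd fact (n - 1) * Dl ?Bb" using IH by simp
      have "PF B = fact b * PF (B - {b})" using PF_insert[OF f, of b] bB by (simp add: insert_absorb)
      moreover have "PF ?Bb = fact (b - 1) * PF (B - {b})" using PF_insert[OF f nb] .
      moreover have "fact b = b * fact (b - 1)" using bB(2) by (simp add: fact_reduce)
      ultimately have "PF B = b * PF ?Bb" by simp
      then show ?thesis using IH' by simp
    qed
    then have "PF B dvd fact n * Dl B" unfolding eq by (intro dvd_sum) auto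
    then show ?thesis unfolding n_def .
  qed
qed

lemma sum_beta:
  assumes "is_partition la"
  shows "(\<Sum>b\<in>beta la. b) = sum_list la + (\<Sum>i<length la. i)"
proof -
  let ?L = "length la"
  have "(\<Sum>b\<in>beta la. b) = (\<Sum>i<?L. la!i + ?L - 1 - i)"
    unfolding beta_def by (rule sum.reindex_cong[OF beta_inj[OF assms] refl]) simp
  also have "\<dots> = (\<Sum>i<?L. la!i) + (\<Sum>i<?L. ?L - 1 - i)"
    unfolding sum.distrib[symmetric] by (rule sum.cong) auto
  also have "(\<Sum>i<?L. ?L - 1 - i) = (\<Sum>i<?L. i)"
    using sum.nat_diff_reindex[of "\<lambda>i. i" ?L] by simp
  also have "(\<Sum>i<?L. la!i) = sum_list la" by (simp add: sum_list_sum_nth atLeast0LessThan)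
  finally show ?thesis .
qed

lemma card_beta: assumes "is_partition la" shows "card (beta la) = length la"
  unfolding beta_def by (subst card_image[OF beta_inj[OF assms]]) simp

theorem HP_dvd_fact:
  assumes "is_partition la"
  shows "HP la dvd fact (sum_list la)"
proof -
  have "PF (beta la) dvd fact (sum_list la) * Dl (beta la)"
    using PF_dvd[OF finite_beta[of la]] sum_beta[OF assms] card_beta[OF assms] by simp
  then have "HP la * Dl (beta la) dvd fact (sum_list la) * Dl (beta la)"
    using HP_beta[OF assms] by simp
  then show ?thesis using Dl_pos[of "beta la"] by simp
qed

section \<open>Star shapes\<close>

lemma star_eq:
  assumes "is_partition gm" "gm \<noteq> []"
  shows "star gm x y = (gm!0 + x) # tl gm @ replicate y 1"
proof -
  have "0 \<notin> set gm" using assms(1) by (simp add: is_partition_def)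
  then have "0 \<notin> set (tl gm)" by (meson list.set_sel(2) assms(2))
  then have "filter (\<lambda>t. t \<noteq> 0) (tl gm) = tl gm" unfolding filter_id_conv by (metis neq0_conv)
  moreover have "0 < gm!0" using part_pos[OF assms(1)] assms(2) by simp
  moreover have "first_part gm = gm!0" using assms(2) by (simp add: first_part_def hd_conv_nth)
  ultimately show ?thesis by (simp add: star_def)
qed

lemma star_nil: "0 < x \<Longrightarrow> star [] x y = star [1] (x - 1) y"
  by (simp add: star_def first_part_def)

lemma star_length:
  assumes "is_partition gm" "gm \<noteq> []"
  shows "length (star gm x y) = length gm + y"
  using assms by (simp add: star_eq)

lemma star_nth:
  assumes "is_partition gm" "gm \<noteq> []" "i < length gm + y"
  shows "star gm x y ! i = (if i = 0 then gm!0 + x else if i < length gm then gm!i else 1)"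
proof -
  obtain g gs where gm: "gm = g # gs" using assms(2) by (cases gm) auto
  show ?thesis
  proof (cases i)
    case 0 then show ?thesis using assms by (simp add: star_eq)
  next
    case (Suc j)
    then show ?thesis using assms gm by (simp add: star_eq nth_append)
  qed
qed

lemma star_pos:
  assumes "is_partition gm" "gm \<noteq> []" "i < length gm + y"
  shows "0 < star gm x y ! i"
proof -
  have l0: "0 < length gm" using assms(2) by simp
  show ?thesis
  proof (cases "i = 0")
    case True then show ?thesis unfolding star_nth[OF assms] using part_pos[OF assms(1) l0] by simp
  next
    case False
    then show ?thesis unfolding star_nth[OF assms] using part_pos[OF assms(1), of i] by simp
  qed
qed

lemma star_partition:
  assumes "is_partition gm" "gm \<noteq> []"
  shows "is_partition (star gm x y)"
  unfolding is_partition_iff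
proof (intro conjI allI impI)
  fix i j assume ij: "i \<le> j" "j < length (star gm x y)"
  then have j: "j < length gm + y" using star_length[OF assms] by simp
  have i: "i < length gm + y" using ij j by simp
  have l0: "0 < length gm" using assms(2) by simp
  show "star gm x y ! j \<le> star gm x y ! i"
  proof (cases "j < length gm")
    case False
    then have "star gm x y ! j = 1" using star_nth[OF assms j] l0 by simp
    then show ?thesis using star_pos[OF assms i, of x] by simp
  next
    case True
    show ?thesis
    proof (cases "j = 0")
      case True then show ?thesis using ij by simp
    next
      case j0: False
      then have sj: "star gm x y ! j = gm!j" using star_nth[OF assms j] True by simp
      show ?thesis
      proof (cases "i = 0")
        case True
        then have "star gm x y ! i = gm!0 + x" using star_nth[OF assms i] by simp
        then show ?thesis using sj part_mono[OF assms(1), of 0 j] \<open>j < length gm\<close> by simp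
      next
        case False
        then have "star gm x y ! i = gm!i" using star_nth[OF assms i] ij True by simp
        then show ?thesis using sj part_mono[OF assms(1), of i j] ij \<open>j < length gm\<close> by simp
      qed
    qed
  qed
next
  fix i assume "i < length (star gm x y)"
  then have i: "i < length gm + y" using star_length[OF assms] by simp
  show "0 < star gm x y ! i" by (rule star_pos[OF assms i])
qed

lemma star_sum:
  assumes "is_partition gm" "gm \<noteq> []"
  shows "sum_list (star gm x y) = sum_list gm + x + y"
  using assms by (simp add: star_eq sum_list_replicate) (cases gm; simp)

lemma star_diagram:
  assumes "is_partition gm" "gm \<noteq> []"
  shows "diagram (star gm x y) = diagram gm \<union> {(0,j) | j. gm!0 \<le> j \<and> j < gm!0 + x}
           \<union> {(i,0) | i. length gm \<le> i \<and> i < length gm + y}"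
proof (intro set_eqI iffI)
  fix c assume "c \<in> diagram (star gm x y)"
  then obtain i j where c: "c = (i,j)" "i < length gm + y" "j < star gm x y ! i"
    by (auto simp: diagram_def star_length[OF assms])
  show "c \<in> diagram gm \<union> {(0,j) | j. gm!0 \<le> j \<and> j < gm!0 + x} \<union> {(i,0) | i. length gm \<le> i \<and> i < length gm + y}"
  proof (cases "i = 0")
    case True
    have l0: "0 < length gm" using assms(2) by simp
    show ?thesis
    proof (cases "j < gm!0")
      case True then show ?thesis using c \<open>i = 0\<close> l0 by (simp add: diagram_def)
    next
      case False then show ?thesis using c \<open>i = 0\<close> star_nth[OF assms c(2)] by simp
    qed
  next
    case False
    show ?thesis
    proof (cases "i < length gm")
      case True then show ?thesis using c False star_nth[OF assms c(2)] by (simp add: diagram_def)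
    next
      case nl: False then show ?thesis using c False star_nth[OF assms c(2)] by simp
    qed
  qed
next
  fix c assume c: "c \<in> diagram gm \<union> {(0,j) | j. gm!0 \<le> j \<and> j < gm!0 + x} \<union> {(i,0) | i. length gm \<le> i \<and> i < length gm + y}"
  have l0: "0 < length gm" using assms(2) by simp
  show "c \<in> diagram (star gm x y)"
  proof -
    from c consider (a) "c \<in> diagram gm" | (b) j where "c = (0,j)" "gm!0 \<le> j" "j < gm!0 + x"
      | (d) i where "c = (i,0)" "length gm \<le> i" "i < length gm + y" by blast
    then show ?thesis
    proof cases
      case a
      then obtain i j where ij: "c = (i,j)" "i < length gm" "j < gm!i" by (auto simp: diagram_def)
      have "i < length gm + y" using ij by simp
      then show ?thesis using ij star_nth[OF assms, of i] star_length[OF assms]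
        by (auto simp: diagram_def)
    next
      case b
      have "0 < length gm + y" using l0 by simp
      then have "star gm x y ! 0 = gm!0 + x" using star_nth[OF assms] by simp
      then show ?thesis using b l0 star_length[OF assms, of x y] by (simp add: diagram_def)
    next
      case d
      have "i \<noteq> 0" "\<not> i < length gm" using d(2) l0 by linarith+
      then have "star gm x y ! i = 1" using star_nth[OF assms d(3)] by simp
      then show ?thesis using d star_length[OF assms, of x y] by (simp add: diagram_def)
    qed
  qed
qed

lemma star_first_part:
  assumes "is_partition gm" "gm \<noteq> []"
  shows "first_part (star gm x y) = gm!0 + x"
  using assms by (simp add: star_eq first_part_def)

lemma star_first_part_conj:
  assumes "is_partition gm" "gm \<noteq> []"
  shows "first_part_conj (star gm x y) = length gm + y"
  unfolding first_part_conj_def conj_part_0[OF star_partition[OF assms]] star_length[OF assms] ..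

definition b0 :: "nat list \<Rightarrow> nat" where "b0 gm = gm!0 + length gm - 1"
definition Bp :: "nat list \<Rightarrow> nat set" where "Bp gm = (\<lambda>i. gm!i + length gm - 1 - i) ` {1..<length gm}"

lemma Bp_finite: "finite (Bp gm)" by (simp add: Bp_def)

lemma Bp_props:
  assumes "is_partition gm" "gm \<noteq> []" "b \<in> Bp gm"
  shows "1 \<le> b" "b < b0 gm"
proof -
  obtain i where i: "1 \<le> i" "i < length gm" "b = gm!i + length gm - 1 - i" using assms(3) by (auto simp: Bp_def)
  show "1 \<le> b" using i part_pos[OF assms(1) i(2)] by simp
  show "b < b0 gm" using i part_mono[OF assms(1), of 0 i] unfolding b0_def by simp
qed

lemma Bp_inj:
  assumes "is_partition gm"
  shows "inj_on (\<lambda>i. gm!i + length gm - 1 - i) {1..<length gm}"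
  using beta_inj[OF assms] by (rule inj_on_subset) auto

lemma card_Bp:
  assumes "is_partition gm"
  shows "card (Bp gm) = length gm - 1"
  unfolding Bp_def by (subst card_image[OF Bp_inj[OF assms]]) simp

lemma beta_star:
  assumes "is_partition gm" "gm \<noteq> []"
  shows "beta (star gm x y) = insert (b0 gm + x + y) ((\<lambda>b. b + y) ` Bp gm \<union> {1..y})"
proof -
  let ?s = "star gm x y" and ?l = "length gm"
  let ?f = "\<lambda>i. ?s!i + length ?s - 1 - i"
  have L: "length ?s = ?l + y" by (rule star_length[OF assms])
  have l0: "0 < ?l" using assms(2) by simp
  have split: "{..<?l + y} = insert 0 ({1..<?l} \<union> {?l..<?l+y})" using l0 by auto
  have "beta ?s = ?f ` insert 0 ({1..<?l} \<union> {?l..<?l+y})" unfolding beta_def L split ..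
  also have "\<dots> = insert (?f 0) (?f ` {1..<?l} \<union> ?f ` {?l..<?l+y})" by (simp add: image_Un)
  also have "?f 0 = b0 gm + x + y"
  proof -
    have "0 < ?l + y" using l0 by simp
    then have "?f 0 = gm!0 + x + (?l + y) - 1" using star_nth[OF assms] L by simp
    then show ?thesis using l0 unfolding b0_def by linarith
  qed
  also have "?f ` {1..<?l} = (\<lambda>b. b + y) ` Bp gm"
  proof -
    have "?f ` {1..<?l} = (\<lambda>i. (gm!i + ?l - 1 - i) + y) ` {1..<?l}"
    proof (rule image_cong[OF refl])
      fix i assume i: "i \<in> {1..<?l}"
      then show "?f i = (gm!i + ?l - 1 - i) + y" using star_nth[OF assms, of i] L by simp
    qed
    then show ?thesis unfolding Bp_def by (simp add: image_image)
  qed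
  also have "?f ` {?l..<?l+y} = {1..y}"
  proof -
    have "?f ` {?l..<?l+y} = (\<lambda>i. ?l + y - i) ` {?l..<?l+y}"
    proof (rule image_cong[OF refl])
      fix i assume i: "i \<in> {?l..<?l+y}"
      then have "?l \<le> i" by simp
      then have "i \<noteq> 0" "\<not> i < ?l" using l0 by linarith+
      then show "?f i = ?l + y - i" using star_nth[OF assms, of i] L i by simp
    qed
    also have "\<dots> = {1..y}"
    proof (intro set_eqI iffI)
      fix t assume "t \<in> (\<lambda>i. ?l + y - i) ` {?l..<?l+y}" then show "t \<in> {1..y}" by auto
    next
      fix t assume t: "t \<in> {1..y}"
      then have "?l + y - t \<in> {?l..<?l+y}" "t = ?l + y - (?l + y - t)" by auto
      then show "t \<in> (\<lambda>i. ?l + y - i) ` {?l..<?l+y}" by blast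
    qed
    finally show ?thesis .
  qed
  finally show ?thesis .
qed

lemma Dl_insert_max:
  assumes "finite S" "\<forall>v\<in>S. v < a"
  shows "Dl (insert a S) = Dl S * (\<Prod>v\<in>S. a - v)"
proof -
  have "a \<notin> S" using assms(2) by auto
  then have "Dl (insert a S) = Dl S * (\<Prod>v\<in>S. dst a v)" by (rule Dl_insert[OF assms(1)])
  also have "(\<Prod>v\<in>S. dst a v) = (\<Prod>v\<in>S. a - v)" using assms(2) by (intro prod.cong) (auto simp: dst_def)
  finally show ?thesis .
qed

lemma Dl_union:
  assumes "finite Y" "finite Z" "\<forall>u\<in>Y. \<forall>v\<in>Z. v < u"
  shows "Dl (Y \<union> Z) = Dl Y * Dl Z * (\<Prod>u\<in>Y. \<Prod>v\<in>Z. u - v)"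
  using assms
proof (induction Y rule: finite_induct)
  case empty then show ?case by simp
next
  case (insert a Y)
  have aZ: "\<forall>v\<in>Z. v < a" using insert.prems by simp
  have aYZ: "a \<notin> Y \<union> Z" using insert.hyps aZ by auto
  have IH: "Dl (Y \<union> Z) = Dl Y * Dl Z * (\<Prod>u\<in>Y. \<Prod>v\<in>Z. u - v)" using insert by simp
  have dYZ: "Y \<inter> Z = {}" using insert.prems by auto
  have "Dl (insert a Y \<union> Z) = Dl (insert a (Y \<union> Z))" by simp
  also have "\<dots> = Dl (Y \<union> Z) * (\<Prod>v\<in>Y \<union> Z. dst a v)"
    by (rule Dl_insert) (use insert.hyps insert.prems aYZ in auto)
  also have "(\<Prod>v\<in>Y \<union> Z. dst a v) = (\<Prod>v\<in>Y. dst a v) * (\<Prod>v\<in>Z. dst a v)"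
    by (rule prod.union_disjoint) (use insert.hyps insert.prems dYZ in auto)
  also have "(\<Prod>v\<in>Z. dst a v) = (\<Prod>v\<in>Z. a - v)" using aZ by (intro prod.cong) (auto simp: dst_def)
  also have "Dl (insert a Y) = Dl Y * (\<Prod>v\<in>Y. dst a v)" by (rule Dl_insert[OF insert.hyps])
  moreover have "(\<Prod>u\<in>insert a Y. \<Prod>v\<in>Z. u - v) = (\<Prod>v\<in>Z. a - v) * (\<Prod>u\<in>Y. \<Prod>v\<in>Z. u - v)"
    using insert.hyps by simp
  ultimately show ?case unfolding IH by (simp only: ac_simps)
qed

lemma prod_shift_fact:
  "1 \<le> c \<Longrightarrow> (\<Prod>t\<in>{1..y}. c + y - t) * fact (c - 1) = fact (c + y - 1)"
proof (induction y arbitrary: c)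
  case 0 then show ?case by simp
next
  case (Suc y)
  have IH: "(\<Prod>t\<in>{1..y}. (c + 1) + y - t) * fact c = fact (c + y)"
    using Suc.IH[of "c+1"] by simp
  have "{1..Suc y} = insert (Suc y) {1..y}" by auto
  then have "(\<Prod>t\<in>{1..Suc y}. c + Suc y - t) = c * (\<Prod>t\<in>{1..y}. c + Suc y - t)" by simp
  also have "(\<Prod>t\<in>{1..y}. c + Suc y - t) = (\<Prod>t\<in>{1..y}. (c + 1) + y - t)" by simp
  finally have A: "(\<Prod>t\<in>{1..Suc y}. c + Suc y - t) = c * (\<Prod>t\<in>{1..y}. (c + 1) + y - t)" .
  have cf: "c * fact (c - 1) = fact c" using Suc.prems by (simp add: fact_reduce[of c])
  have "(\<Prod>t\<in>{1..Suc y}. c + Suc y - t) * fact (c - 1) = (\<Prod>t\<in>{1..y}. (c + 1) + y - t) * (c * fact (c - 1))"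
    unfolding A by (simp only: ac_simps)
  also have "\<dots> = fact (c + y)" unfolding cf using IH .
  finally show ?case by simp
qed

lemma atLeastAtMost_Suc_img: "{1..y} = Suc ` {..<y}"
proof (intro set_eqI iffI)
  fix t assume "t \<in> {1..y}" then have "t = Suc (t - 1)" "t - 1 < y" by auto
  then show "t \<in> Suc ` {..<y}" by blast
qed auto

lemma Dl_1y: "Dl {1..y} = PF {..<y}"
proof -
  have "Suc ` {..<y} = (+) 1 ` {..<y}" by auto
  then have "Dl {1..y} = Dl {..<y}" unfolding atLeastAtMost_Suc_img by (metis Dl_shift)
  then show ?thesis using Dl_lessThan by simp
qed

lemma PF_1y: "PF {1..y} = PF {..<y} * fact y"
proof -
  have "PF {1..y} = (\<Prod>s<y. fact (Suc s))" unfolding atLeastAtMost_Suc_img PF_def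
    by (simp add: prod.reindex)
  also have "\<dots> = PF {..<Suc y}" unfolding PF_def by (subst prod.lessThan_Suc_shift) simp
  also have "\<dots> = PF {..<y} * fact y" unfolding PF_def by simp
  finally show ?thesis .
qed

theorem KF:
  assumes "is_partition gm" "gm \<noteq> []"
  defines "b \<equiv> b0 gm" and "B \<equiv> Bp gm"
  shows "HP (star gm x y) * Dl B * (\<Prod>c\<in>B. b - c + x) =
         (b + x + y) * (\<Prod>c\<in>B. c + y) * fact y * fact (b + x - 1) * (\<Prod>c\<in>B. fact (c - 1))"
proof -
  let ?s = "star gm x y"
  define Y where "Y = (\<lambda>c. c + y) ` B"
  define Z where "Z = {1..y::nat}"
  have fB: "finite B" unfolding B_def by (rule Bp_finite)
  have B1: "1 \<le> c" "c < b" if "c \<in> B" for c using Bp_props[OF assms(1,2)] that unfolding B_def b_def by auto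
  have l0: "0 < length gm" using assms(2) by simp
  have b1: "1 \<le> b" unfolding b_def b0_def using part_pos[OF assms(1) l0] l0 by linarith
  have fY: "finite Y" "finite Z" unfolding Y_def Z_def using fB by auto
  have YZ: "\<forall>u\<in>Y. \<forall>v\<in>Z. v < u" unfolding Y_def Z_def using B1 by fastforce
  have topYZ: "\<forall>v\<in>Y \<union> Z. v < b + x + y" unfolding Y_def Z_def using B1 b1 by fastforce
  have bs: "beta ?s = insert (b + x + y) (Y \<union> Z)"
    unfolding Y_def Z_def b_def B_def by (rule beta_star[OF assms(1,2)])
  have injy: "inj_on (\<lambda>c. c + y) B" by (rule inj_onI) simp
  define S where "S = PF {..<y}"
  define R where "R = (\<Prod>c\<in>B. \<Prod>t\<in>{1..y}. c + y - t)"
  define Q where "Q = (\<Prod>c\<in>B. b - c + x)"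
  define T where "T = (\<Prod>t\<in>{1..y}. b + x + y - t)"
  define FB where "FB = (\<Prod>c\<in>B. fact (c - 1) :: nat)"
  define FBy where "FBy = (\<Prod>c\<in>B. fact (c + y - 1) :: nat)"
  define P where "P = (\<Prod>c\<in>B. c + y)"
  define F1 where "F1 = (fact (b + x + y - 1) :: nat)"
  have DlYZ: "Dl (Y \<union> Z) = Dl B * S * R"
  proof -
    have "Dl Y = Dl B" unfolding Y_def using Dl_shift[of y B] by (simp add: add.commute)
    moreover have "Dl Z = S" unfolding Z_def S_def by (rule Dl_1y)
    moreover have "(\<Prod>u\<in>Y. \<Prod>v\<in>Z. u - v) = R" unfolding Y_def Z_def R_def by (simp add: prod.reindex[OF injy])
    ultimately show ?thesis using Dl_union[OF fY YZ] by simp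
  qed
  have Dlb: "Dl (beta ?s) = Dl B * S * R * Q * T"
  proof -
    have "Dl (beta ?s) = Dl (Y \<union> Z) * (\<Prod>v\<in>Y \<union> Z. b + x + y - v)"
      unfolding bs by (rule Dl_insert_max) (use fY topYZ in auto)
    also have "(\<Prod>v\<in>Y \<union> Z. b + x + y - v) = (\<Prod>v\<in>Y. b + x + y - v) * (\<Prod>v\<in>Z. b + x + y - v)"
      by (rule prod.union_disjoint) (use fY YZ in auto)
    also have "(\<Prod>v\<in>Y. b + x + y - v) = Q" unfolding Y_def Q_def prod.reindex[OF injy]
    proof (rule prod.cong[OF refl])
      fix c assume "c \<in> B"
      then have "c < b" by (rule B1(2))
      then show "((\<lambda>v. b + x + y - v) \<circ> (\<lambda>c. c + y)) c = b - c + x" by simp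
    qed
    also have "(\<Prod>v\<in>Z. b + x + y - v) = T" unfolding Z_def T_def ..
    finally show ?thesis using DlYZ by simp
  qed
  have PFb: "PF (beta ?s) = fact (b + x + y) * (\<Prod>c\<in>B. fact (c + y)) * S * fact y"
  proof -
    have "PF (beta ?s) = fact (b + x + y) * PF (Y \<union> Z)"
      unfolding bs by (rule PF_insert) (use fY topYZ in auto)
    also have "PF (Y \<union> Z) = PF Y * PF Z" unfolding PF_def by (rule prod.union_disjoint) (use fY YZ in auto)
    also have "PF Y = (\<Prod>c\<in>B. fact (c + y))" unfolding Y_def PF_def by (simp add: prod.reindex[OF injy])
    also have "PF Z = S * fact y" unfolding Z_def S_def by (rule PF_1y)
    finally show ?thesis by simp
  qed
  have eq0: "HP ?s * (Dl B * S * R * Q * T) = fact (b + x + y) * (\<Prod>c\<in>B. fact (c + y)) * S * fact y"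
    using HP_beta[OF star_partition[OF assms(1,2)], of x y] Dlb PFb by simp
  have RFB: "R * FB = FBy" unfolding R_def FB_def FBy_def prod.distrib[symmetric]
    by (rule prod.cong[OF refl], rule prod_shift_fact) (use B1 in auto)
  have TF: "T * fact (b + x - 1) = F1" unfolding T_def F1_def
    using prod_shift_fact[of "b + x" y] b1 by simp
  have PFy: "(\<Prod>c\<in>B. fact (c + y)) = P * FBy" unfolding P_def FBy_def prod.distrib[symmetric]
  proof (rule prod.cong[OF refl])
    fix c assume "c \<in> B"
    then have "1 \<le> c" by (rule B1(1))
    then have "1 \<le> c + y" by simp
    then show "fact (c + y) = (c + y) * fact (c + y - 1)" by (cases "c + y") auto
  qed
  have Fb: "fact (b + x + y) = (b + x + y) * F1" unfolding F1_def using b1 by (cases "b + x + y") auto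
  have "HP ?s * Dl B * Q * (S * FBy * F1) = ((b + x + y) * P * fact y * fact (b + x - 1) * FB) * (S * FBy * F1)"
  proof -
    have "HP ?s * Dl B * Q * (S * FBy * F1) = (HP ?s * (Dl B * S * R * Q * T)) * (FB * fact (b + x - 1))"
      unfolding RFB[symmetric] TF[symmetric] by (simp only: ac_simps)
    also have "\<dots> = fact (b + x + y) * (\<Prod>c\<in>B. fact (c + y)) * S * fact y * (FB * fact (b + x - 1))"
      unfolding eq0 ..
    also have "\<dots> = ((b + x + y) * P * fact y * fact (b + x - 1) * FB) * (S * FBy * F1)"
      unfolding Fb PFy by (simp only: ac_simps)
    finally show ?thesis .
  qed
  moreover have "S * FBy * F1 \<noteq> 0" unfolding S_def FBy_def F1_def using PF_pos[of "{..<y}"]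
    by (simp add: prod_pos)
  ultimately have "HP ?s * Dl B * Q = (b + x + y) * P * fact y * fact (b + x - 1) * FB"
    using mult_right_cancel by blast
  then show ?thesis unfolding Q_def P_def FB_def .
qed

section \<open>Kummer-type criterion\<close>

lemma mult_fact_Suc:
  assumes "prime (p::nat)"
  shows "multiplicity p (fact (Suc n) :: nat) = multiplicity p (Suc n) + multiplicity p (fact n :: nat)"
proof -
  have "fact (Suc n) = (Suc n) * (fact n :: nat)" by simp
  moreover have "multiplicity p (Suc n * (fact n :: nat)) = multiplicity p (Suc n) + multiplicity p (fact n :: nat)"
    by (rule prime_elem_multiplicity_mult_distrib) (use assms in auto)
  ultimately show ?thesis by simp
qed

lemma card_pow_dvd:
  assumes "prime (p::nat)" "0 < m" "m \<le> K"
  shows "card {i\<in>{1..K}. p^i dvd m} = multiplicity p m"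
proof -
  have nu: "\<not> is_unit p" using prime_gt_1_nat[OF assms(1)] by simp
  have m0: "m \<noteq> 0" using assms(2) by simp
  have le: "multiplicity p m \<le> K"
  proof -
    have "p ^ multiplicity p m dvd m" by (rule multiplicity_dvd)
    then have "p ^ multiplicity p m \<le> m" using assms(2) by (simp add: dvd_imp_le)
    moreover have "multiplicity p m < p ^ multiplicity p m"
    proof -
      have "multiplicity p m < 2 ^ multiplicity p m" by (rule less_exp)
      moreover have "(2::nat) ^ multiplicity p m \<le> p ^ multiplicity p m"
        by (rule power_mono) (use prime_ge_2_nat[OF assms(1)] in auto)
      ultimately show ?thesis by linarith
    qed
    ultimately show ?thesis using assms(3) by linarith
  qed
  have "{i\<in>{1..K}. p^i dvd m} = {1..multiplicity p m}"
  proof (intro set_eqI iffI)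
    fix i assume "i \<in> {i\<in>{1..K}. p^i dvd m}"
    then have "1 \<le> i" "p^i dvd m" by auto
    then show "i \<in> {1..multiplicity p m}" using power_dvd_iff_le_multiplicity[OF m0 nu, of i] by simp
  next
    fix i assume i: "i \<in> {1..multiplicity p m}"
    then have "p^i dvd m" using power_dvd_iff_le_multiplicity[OF m0 nu, of i] by simp
    then show "i \<in> {i\<in>{1..K}. p^i dvd m}" using i le by simp
  qed
  then show ?thesis by simp
qed

lemma Suc_div_ind:
  assumes "0 < (q::nat)"
  shows "Suc n div q = n div q + (if q dvd Suc n then 1 else 0)"
  using div_Suc[of n q] by (auto simp: dvd_eq_mod_eq_0)

lemma legendre:
  assumes "prime (p::nat)" "n \<le> K"
  shows "multiplicity p (fact n :: nat) = (\<Sum>i\<in>{1..K}. n div p^i)"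
  using assms(2)
proof (induction n)
  case 0 then show ?case by simp
next
  case (Suc n)
  have p0: "\<And>i. 0 < p ^ i" using assms(1) prime_gt_0_nat by simp
  have "(\<Sum>i\<in>{1..K}. Suc n div p^i) = (\<Sum>i\<in>{1..K}. n div p^i) + (\<Sum>i\<in>{1..K}. if p^i dvd Suc n then 1 else 0)"
    by (simp add: Suc_div_ind[OF p0] sum.distrib)
  also have "(\<Sum>i\<in>{1..K}. if p^i dvd Suc n then 1 else (0::nat)) = card {i\<in>{1..K}. p^i dvd Suc n}"
  proof -
    have "{i\<in>{1..K}. p^i dvd Suc n} = {1..K} \<inter> {i. p^i dvd Suc n}" by auto
    then show ?thesis by (simp add: sum.If_cases)
  qed
  also have "\<dots> = multiplicity p (Suc n)" by (rule card_pow_dvd[OF assms(1)]) (use Suc.prems in auto)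
  finally show ?case using mult_fact_Suc[OF assms(1), of n] Suc by simp
qed

lemma div_no_carry:
  assumes "B \<le> A" "B mod q \<le> A mod (q::nat)" "0 < q"
  shows "A div q = B div q + (A - B) div q"
proof -
  have A: "A = B + (A - B)" using assms(1) by simp
  have "A div q = B div q + (A - B) div q + (B mod q + (A - B) mod q) div q"
    using div_add1_eq[of B "A - B" q] A by simp
  moreover have "B mod q + (A - B) mod q < q"
  proof (rule ccontr)
    assume "\<not> B mod q + (A - B) mod q < q"
    moreover have "(B mod q + (A - B) mod q) mod q = A mod q" using A by (metis mod_add_eq)
    moreover have "B mod q + (A - B) mod q < 2 * q" using assms(3) by (simp add: mod_less_divisor add_strict_mono mult_2)
    ultimately have "B mod q + (A - B) mod q = A mod q + q"
      by (metis le_add_diff_inverse2 less_diff_conv2 mod_if mult_2 not_le)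
    moreover have "(A - B) mod q < q" using assms(3) by simp
    ultimately show False using assms(2) by linarith
  qed
  ultimately show ?thesis by simp
qed

theorem kummer:
  assumes "prime (p::nat)" "B \<le> A" "\<forall>i. B mod p^i \<le> A mod p^i"
  shows "\<not> p dvd (A choose B)"
proof -
  have nu: "\<not> is_unit p" using prime_gt_1_nat[OF assms(1)] by simp
  have C0: "A choose B \<noteq> 0" using assms(2) by simp
  have eq: "fact B * fact (A - B) * (A choose B) = (fact A :: nat)" by (rule binomial_fact_lemma[OF assms(2)])
  have "multiplicity p (fact A :: nat) = multiplicity p (fact B :: nat) + multiplicity p (fact (A - B) :: nat) + multiplicity p (A choose B)"
  proof -
    have "multiplicity p (fact B * fact (A - B) * (A choose B) :: nat) =
          multiplicity p (fact B * fact (A - B) :: nat) + multiplicity p (A choose B)"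
      by (rule prime_elem_multiplicity_mult_distrib) (use assms(1) C0 in auto)
    also have "multiplicity p (fact B * fact (A - B) :: nat) = multiplicity p (fact B :: nat) + multiplicity p (fact (A - B) :: nat)"
      by (rule prime_elem_multiplicity_mult_distrib) (use assms(1) in auto)
    finally show ?thesis using eq by simp
  qed
  moreover have "multiplicity p (fact A :: nat) = multiplicity p (fact B :: nat) + multiplicity p (fact (A - B) :: nat)"
  proof -
    have p0: "\<And>i. 0 < p ^ i" using assms(1) prime_gt_0_nat by simp
    have "multiplicity p (fact A :: nat) = (\<Sum>i\<in>{1..A}. A div p^i)" by (rule legendre[OF assms(1)]) simp
    also have "\<dots> = (\<Sum>i\<in>{1..A}. B div p^i + (A - B) div p^i)"
      by (rule sum.cong[OF refl], rule div_no_carry) (use assms p0 in auto)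
    also have "\<dots> = (\<Sum>i\<in>{1..A}. B div p^i) + (\<Sum>i\<in>{1..A}. (A - B) div p^i)" by (rule sum.distrib)
    also have "(\<Sum>i\<in>{1..A}. B div p^i) = multiplicity p (fact B :: nat)"
      by (rule legendre[OF assms(1), symmetric]) (use assms(2) in simp)
    also have "(\<Sum>i\<in>{1..A}. (A - B) div p^i) = multiplicity p (fact (A - B) :: nat)"
      by (rule legendre[OF assms(1), symmetric]) simp
    finally show ?thesis .
  qed
  ultimately have "multiplicity p (A choose B) = 0" by simp
  then show ?thesis by (simp add: multiplicity_eq_zero_iff[OF C0 nu])
qed

definition RR :: "(nat \<times> nat) set \<Rightarrow> nat \<times> nat \<Rightarrow> nat \<times> nat \<Rightarrow> bool" where
  "RR S = (\<lambda>x y. x \<in> S \<and> y \<in> S \<and> cell_adj x y)"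

lemma RR_sym: "RR S x y \<Longrightarrow> RR S y x"
  unfolding RR_def cell_adj_def by auto

lemma RR_rtr_sym: "(RR S)\<^sup>*\<^sup>* x y \<Longrightarrow> (RR S)\<^sup>*\<^sup>* y x"
proof (induction rule: rtranclp_induct)
  case base then show ?case by simp
next
  case (step y z)
  then show ?case using RR_sym by (meson converse_rtranclp_into_rtranclp)
qed

lemma cells_connected_RR: "cells_connected S \<longleftrightarrow> S \<noteq> {} \<and> (\<forall>c\<in>S. \<forall>d\<in>S. (RR S)\<^sup>*\<^sup>* c d)"
  unfolding cells_connected_def RR_def ..

lemma row_path:
  assumes "\<forall>j. j1 \<le> j \<and> j \<le> j2 \<longrightarrow> (r,j) \<in> S" "j1 \<le> j2"
  shows "(RR S)\<^sup>*\<^sup>* (r,j1) (r,j2)"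
  using assms
proof (induction j2)
  case 0 then show ?case by simp
next
  case (Suc j2)
  show ?case
  proof (cases "j1 = Suc j2")
    case True then show ?thesis by simp
  next
    case False
    then have "(RR S)\<^sup>*\<^sup>* (r,j1) (r,j2)" using Suc by simp
    moreover have "RR S (r,j2) (r, Suc j2)" using Suc.prems False unfolding RR_def cell_adj_def by auto
    ultimately show ?thesis by (rule rtranclp.rtrancl_into_rtrancl)
  qed
qed

lemma col_path:
  assumes "\<forall>i. i1 \<le> i \<and> i \<le> i2 \<longrightarrow> (i,c) \<in> S" "i1 \<le> i2"
  shows "(RR S)\<^sup>*\<^sup>* (i1,c) (i2,c)"
  using assms
proof (induction i2)
  case 0 then show ?case by simp
next
  case (Suc i2)
  show ?case
  proof (cases "i1 = Suc i2")
    case True then show ?thesis by simp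
  next
    case False
    then have "(RR S)\<^sup>*\<^sup>* (i1,c) (i2,c)" using Suc by simp
    moreover have "RR S (i2,c) (Suc i2, c)" using Suc.prems False unfolding RR_def cell_adj_def by auto
    ultimately show ?thesis by (rule rtranclp.rtrancl_into_rtrancl)
  qed
qed

definition rowseg :: "nat \<Rightarrow> nat \<Rightarrow> nat \<Rightarrow> (nat \<times> nat) set" where
  "rowseg r a p = {(r,j) | j. a \<le> j \<and> j < a + p}"

definition colseg :: "nat \<Rightarrow> nat \<Rightarrow> nat \<Rightarrow> (nat \<times> nat) set" where
  "colseg c a p = {(i,c) | i. a \<le> i \<and> i < a + p}"

definition hookset :: "nat \<Rightarrow> nat \<Rightarrow> (nat \<times> nat) set" where
  "hookset r s = {(0,j) | j. j \<le> r} \<union> {(i,0) | i. 1 \<le> i \<and> i \<le> s}"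

lemma card_rowseg: "card (rowseg r a p) = p"
proof -
  have "rowseg r a p = (\<lambda>j. (r,j)) ` {a..<a+p}" unfolding rowseg_def by auto
  moreover have "inj_on (\<lambda>j. (r,j)) {a..<a+p}" by (rule inj_onI) auto
  ultimately show ?thesis by (simp add: card_image)
qed

lemma card_colseg: "card (colseg c a p) = p"
proof -
  have "colseg c a p = (\<lambda>i. (i,c)) ` {a..<a+p}" unfolding colseg_def by auto
  moreover have "inj_on (\<lambda>i. (i,c)) {a..<a+p}" by (rule inj_onI) auto
  ultimately show ?thesis by (simp add: card_image)
qed

lemma conn_rowseg:
  assumes "0 < p" shows "cells_connected (rowseg r a p)"
  unfolding cells_connected_RR
proof (intro conjI ballI)
  show "rowseg r a p \<noteq> {}" using assms unfolding rowseg_def by auto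
next
  fix c d assume c: "c \<in> rowseg r a p" and d: "d \<in> rowseg r a p"
  then obtain j1 j2 where cd: "c = (r,j1)" "d = (r,j2)" "a \<le> j1" "j1 < a + p" "a \<le> j2" "j2 < a + p"
    unfolding rowseg_def by auto
  have all: "\<forall>j. min j1 j2 \<le> j \<and> j \<le> max j1 j2 \<longrightarrow> (r,j) \<in> rowseg r a p"
    using cd unfolding rowseg_def by auto
  show "(RR (rowseg r a p))\<^sup>*\<^sup>* c d"
  proof (cases "j1 \<le> j2")
    case True then show ?thesis using row_path[of j1 j2 r] all cd by simp
  next
    case False
    then have "(RR (rowseg r a p))\<^sup>*\<^sup>* d c" using row_path[of j2 j1 r] all cd by simp
    then show ?thesis by (rule RR_rtr_sym)
  qed
qed

lemma conn_colseg:
  assumes "0 < p" shows "cells_connected (colseg c a p)"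
  unfolding cells_connected_RR
proof (intro conjI ballI)
  show "colseg c a p \<noteq> {}" using assms unfolding colseg_def by auto
next
  fix x y assume x: "x \<in> colseg c a p" and y: "y \<in> colseg c a p"
  then obtain i1 i2 where cd: "x = (i1,c)" "y = (i2,c)" "a \<le> i1" "i1 < a + p" "a \<le> i2" "i2 < a + p"
    unfolding colseg_def by auto
  have all: "\<forall>i. min i1 i2 \<le> i \<and> i \<le> max i1 i2 \<longrightarrow> (i,c) \<in> colseg c a p"
    using cd unfolding colseg_def by auto
  show "(RR (colseg c a p))\<^sup>*\<^sup>* x y"
  proof (cases "i1 \<le> i2")
    case True then show ?thesis using col_path[of i1 i2 c] all cd by simp
  next
    case False
    then have "(RR (colseg c a p))\<^sup>*\<^sup>* y x" using col_path[of i2 i1 c] all cd by simp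
    then show ?thesis by (rule RR_rtr_sym)
  qed
qed

lemma conn_hookset: "cells_connected (hookset r s)"
  unfolding cells_connected_RR
proof (intro conjI ballI)
  show "hookset r s \<noteq> {}" unfolding hookset_def by auto
next
  have to0: "(RR (hookset r s))\<^sup>*\<^sup>* c (0,0)" if "c \<in> hookset r s" for c
  proof -
    from that consider (a) j where "c = (0,j)" "j \<le> r" | (b) i where "c = (i,0)" "1 \<le> i" "i \<le> s"
      unfolding hookset_def by auto
    then show ?thesis
    proof cases
      case a
      have "(RR (hookset r s))\<^sup>*\<^sup>* (0,0) (0,j)"
        by (rule row_path) (use a in \<open>auto simp: hookset_def\<close>)
      then show ?thesis using a RR_rtr_sym by blast
    next
      case b
      have "(RR (hookset r s))\<^sup>*\<^sup>* (0,0) (i,0)"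
        by (rule col_path) (use b in \<open>auto simp: hookset_def\<close>)
      then show ?thesis using b RR_rtr_sym by blast
    qed
  qed
  fix c d assume "c \<in> hookset r s" "d \<in> hookset r s"
  then show "(RR (hookset r s))\<^sup>*\<^sup>* c d" using to0 RR_rtr_sym by (meson rtranclp_trans)
qed

lemma nosq_rowseg: "no_square (rowseg r a p)"
  unfolding no_square_def rowseg_def by auto

lemma nosq_colseg: "no_square (colseg c a p)"
  unfolding no_square_def colseg_def by auto

lemma nosq_hookset: "no_square (hookset r s)"
  unfolding no_square_def hookset_def by auto

lemma diagram_mem: "(i,j) \<in> diagram la \<longleftrightarrow> i < length la \<and> j < la!i"
  by (simp add: diagram_def)

lemma remove_row:
  assumes "is_partition gm" "gm \<noteq> []" "0 < p"
  shows "remove_hook p (star gm (u+p) v) (star gm u v)"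
proof -
  let ?g = "gm!0" and ?l = "length gm"
  have l0: "0 < ?l" using assms(2) by simp
  have dg: "(0,j) \<notin> diagram gm" if "?g \<le> j" for j using that by (simp add: diagram_mem)
  have "diagram (star gm (u+p) v) - diagram (star gm u v) = rowseg 0 (?g + u) p"
    unfolding star_diagram[OF assms(1,2)] rowseg_def using dg l0 by auto
  moreover have "diagram (star gm u v) \<subseteq> diagram (star gm (u+p) v)"
    unfolding star_diagram[OF assms(1,2)] by auto
  ultimately show ?thesis unfolding remove_hook_def
    using star_partition[OF assms(1,2)] card_rowseg conn_rowseg[OF assms(3)] nosq_rowseg by simp
qed

lemma remove_col:
  assumes "is_partition gm" "gm \<noteq> []" "0 < p"
  shows "remove_hook p (star gm u (v+p)) (star gm u v)"
proof -
  let ?g = "gm!0" and ?l = "length gm"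
  have dg: "(i,0) \<notin> diagram gm" if "?l \<le> i" for i using that by (simp add: diagram_mem)
  have "diagram (star gm u (v+p)) - diagram (star gm u v) = colseg 0 (?l + v) p"
    unfolding star_diagram[OF assms(1,2)] colseg_def using dg assms(2) by auto
  moreover have "diagram (star gm u v) \<subseteq> diagram (star gm u (v+p))"
    unfolding star_diagram[OF assms(1,2)] by auto
  ultimately show ?thesis unfolding remove_hook_def
    using star_partition[OF assms(1,2)] card_colseg conn_colseg[OF assms(3)] nosq_colseg by simp
qed

lemma part_1: "is_partition [1]" by (simp add: is_partition_def)

lemma remove_last:
  assumes "r + s + 1 = p"
  shows "remove_hook p (star [1] r s) []"
proof -
  have d1: "diagram [1::nat] = {(0,0)}" by (auto simp: diagram_def)
  have "diagram (star [1] r s) = diagram [1] \<union> {(0,j) | j. [1::nat]!0 \<le> j \<and> j < [1::nat]!0 + r}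
           \<union> {(i,0) | i. length [1::nat] \<le> i \<and> i < length [1::nat] + s}"
    by (rule star_diagram[OF part_1]) simp
  also have "\<dots> = hookset r s" unfolding d1 hookset_def by auto
  finally have "diagram (star [1] r s) = hookset r s" .
  moreover have "card (hookset r s) = p"
  proof -
    have "hookset r s = (\<lambda>j. (0,j)) ` {..r} \<union> (\<lambda>i. (i,0)) ` {1..s}" unfolding hookset_def by auto
    moreover have "card ((\<lambda>j. (0::nat,j)) ` {..r}) = r + 1" by (subst card_image) (auto intro: inj_onI)
    moreover have "card ((\<lambda>i. (i,0::nat)) ` {1..s}) = s" by (subst card_image) (auto intro: inj_onI)
    moreover have "(\<lambda>j. (0::nat,j)) ` {..r} \<inter> (\<lambda>i. (i,0::nat)) ` {1..s} = {}" by auto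
    ultimately show ?thesis using assms by (simp add: card_Un_disjoint)
  qed
  ultimately show ?thesis unfolding remove_hook_def
    using conn_hookset nosq_hookset by (simp add: diagram_def is_partition_def)
qed

lemma chain_row:
  assumes "is_partition gm" "gm \<noteq> []" "0 < p"
  shows "(remove_hook p)\<^sup>*\<^sup>* (star gm (u + q*p) v) (star gm u v)"
proof (induction q)
  case 0 then show ?case by simp
next
  case (Suc q)
  have "remove_hook p (star gm ((u + q*p) + p) v) (star gm (u + q*p) v)" by (rule remove_row[OF assms])
  then show ?case using Suc by (simp add: add.assoc add.commute[of p] converse_rtranclp_into_rtranclp)
qed

lemma chain_col:
  assumes "is_partition gm" "gm \<noteq> []" "0 < p"
  shows "(remove_hook p)\<^sup>*\<^sup>* (star gm u (v + q*p)) (star gm u v)"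
proof (induction q)
  case 0 then show ?case by simp
next
  case (Suc q)
  have "remove_hook p (star gm u ((v + q*p) + p)) (star gm u (v + q*p))" by (rule remove_col[OF assms])
  then show ?case using Suc by (simp add: add.assoc add.commute[of p] converse_rtranclp_into_rtranclp)
qed

lemma star_00:
  assumes "is_partition gm" "gm \<noteq> []"
  shows "star gm 0 0 = gm"
  using assms by (simp add: star_eq) (metis hd_Cons_tl hd_conv_nth)

lemma chain_to_core:
  assumes "is_partition gm" "gm \<noteq> []" "0 < p" "p dvd x" "p dvd y"
  shows "(remove_hook p)\<^sup>*\<^sup>* (star gm x y) gm"
proof -
  obtain q1 where q1: "x = q1 * p" using assms(4) by (metis dvdE mult.commute)
  obtain q2 where q2: "y = q2 * p" using assms(5) by (metis dvdE mult.commute)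
  note q = q1 q2
  have "(remove_hook p)\<^sup>*\<^sup>* (star gm (0 + q1*p) (q2*p)) (star gm 0 (q2*p))" by (rule chain_row[OF assms(1-3)])
  moreover have "(remove_hook p)\<^sup>*\<^sup>* (star gm 0 (0 + q2*p)) (star gm 0 0)" by (rule chain_col[OF assms(1-3)])
  ultimately show ?thesis using q star_00[OF assms(1,2)] by simp
qed

lemma chain_to_empty:
  assumes "0 < p" "0 < x" "p dvd (x + y)"
  shows "(remove_hook p)\<^sup>*\<^sup>* (star [] x y) []"
proof -
  define r where "r = (x - 1) mod p"
  define s where "s = y mod p"
  have x1: "x - 1 = r + ((x - 1) div p) * p" unfolding r_def by simp
  have y1: "y = s + (y div p) * p" unfolding s_def by simp
  have rp: "r < p" "s < p" unfolding r_def s_def using assms(1) by simp_all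
  have "p dvd (r + s + 1)"
  proof -
    have "x + y = (r + s + 1) + ((x - 1) div p + y div p) * p" using x1 y1 assms(2) by (simp add: algebra_simps)
    then show ?thesis using assms(3) by (metis dvd_add_times_triv_right_iff)
  qed
  then obtain k where k: "r + s + 1 = p * k" by (auto elim!: dvdE)
  have "0 < k" using k by (cases k) auto
  moreover have "k < 2" using k rp by (cases "k \<ge> 2") (auto dest: mult_le_mono2[of 2 k p])
  ultimately have rs: "r + s + 1 = p" using k by (cases k) auto
  have "star [] x y = star [1] (x - 1) y" using star_nil[OF assms(2)] .
  moreover have "(remove_hook p)\<^sup>*\<^sup>* (star [1] (r + ((x - 1) div p) * p) y) (star [1] r y)"
    by (rule chain_row[OF part_1 _ assms(1)]) simp
  moreover have "(remove_hook p)\<^sup>*\<^sup>* (star [1] r (s + (y div p) * p)) (star [1] r s)"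
    by (rule chain_col[OF part_1 _ assms(1)]) simp
  moreover have "remove_hook p (star [1] r s) []" by (rule remove_last[OF rs])
  ultimately show ?thesis using x1 y1 by (metis (no_types, lifting) rtranclp.rtrancl_into_rtrancl rtranclp_trans)
qed

lemma no_hook_small:
  assumes "sum_list gm < p"
  shows "\<not> (\<exists>mu. remove_hook p gm mu)"
proof
  assume "\<exists>mu. remove_hook p gm mu"
  then obtain mu where "remove_hook p gm mu" by blast
  then have "card (diagram gm - diagram mu) = p" by (simp add: remove_hook_def)
  moreover have "card (diagram gm - diagram mu) \<le> card (diagram gm)"
    by (rule card_mono) (auto simp: diagram_finite)
  ultimately show False using assms card_diagram by simp
qed

section \<open>Contents of rim hooks\<close>

definition cont :: "nat \<times> nat \<Rightarrow> int" where "cont c = int (snd c) - int (fst c)"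

definition csum :: "(nat \<times> nat) set \<Rightarrow> int" where "csum S = (\<Sum>c\<in>S. cont c)"

lemma rim_inj:
  assumes "is_partition la" "is_partition mu" "remove_hook p la mu"
  shows "inj_on cont (diagram la - diagram mu)"
proof (rule inj_onI, rule ccontr)
  let ?D = "diagram la - diagram mu"
  have ns: "no_square ?D" using assms(3) by (simp add: remove_hook_def)
  have key: False if c1: "(i,j) \<in> ?D" and c2: "(i',j') \<in> ?D" and lt: "i < i'" and eq: "int j - int i = int j' - int i'"
    for i j i' j'
  proof -
    have jj: "j < j'" using lt eq by linarith
    have inla: "(a,b) \<in> diagram la" if "a \<le> i'" "b \<le> j'" for a b
      using diagram_down[OF assms(1), of i' j' a b] c2 that by auto
    have notmu: "(a,b) \<notin> diagram mu" if "i \<le> a" "j \<le> b" for a b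
      using diagram_down[OF assms(2), of a b i j] c1 that by auto
    have "(i,j) \<in> ?D" "(Suc i, j) \<in> ?D" "(i, Suc j) \<in> ?D" "(Suc i, Suc j) \<in> ?D"
      using inla notmu lt jj c1 by auto
    then show False using ns unfolding no_square_def by blast
  qed
  fix c d assume c: "c \<in> ?D" and d: "d \<in> ?D" and cd: "cont c = cont d" and ne: "c \<noteq> d"
  obtain i j i' j' where ij: "c = (i,j)" "d = (i',j')" by (cases c, cases d) auto
  have eq: "int j - int i = int j' - int i'" using cd ij by (simp add: cont_def)
  show False
  proof (cases "i < i'")
    case True then show False using key[of i j i' j'] c d ij eq by simp
  next
    case False
    show False
    proof (cases "i' < i")
      case True then show False using key[of i' j' i j] c d ij eq by simp
    next
      case False
      then have "i = i'" using \<open>\<not> i < i'\<close> by simp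
      then have "j = j'" using eq by simp
      then show False using ne ij \<open>i = i'\<close> by simp
    qed
  qed
qed

lemma adj_cont: "cell_adj c d \<Longrightarrow> cont d = cont c + 1 \<or> cont d = cont c - 1"
  unfolding cell_adj_def cont_def by auto

lemma rim_interval:
  assumes "(RR S)\<^sup>*\<^sup>* c d" "c \<in> S"
  shows "\<forall>v. min (cont c) (cont d) \<le> v \<and> v \<le> max (cont c) (cont d) \<longrightarrow> (\<exists>e\<in>S. cont e = v)"
  using assms(1)
proof (induction rule: rtranclp_induct)
  case base
  then show ?case using assms(2) by auto
next
  case (step d' d)
  have dS: "d \<in> S" and adj: "cell_adj d' d" using step.hyps(2) unfolding RR_def by auto
  have a: "cont d = cont d' + 1 \<or> cont d = cont d' - 1" by (rule adj_cont[OF adj])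
  show ?case
  proof (intro allI impI)
    fix v assume v: "min (cont c) (cont d) \<le> v \<and> v \<le> max (cont c) (cont d)"
    show "\<exists>e\<in>S. cont e = v"
    proof (cases "min (cont c) (cont d') \<le> v \<and> v \<le> max (cont c) (cont d')")
      case True then show ?thesis using step.IH by blast
    next
      case False
      then have "v = cont d" using v a by linarith
      then show ?thesis using dS by blast
    qed
  qed
qed

lemma sum_lessThan_int: "2 * (\<Sum>k<n. int k) = int n * (int n - 1)"
  by (induction n) (simp_all add: algebra_simps)

lemma rim_sum:
  assumes "is_partition la" "is_partition mu" "remove_hook p la mu"
  shows "\<exists>c0. 2 * csum (diagram la - diagram mu) = int p * (2 * c0 + int p - 1)"
proof -
  let ?D = "diagram la - diagram mu"
  have fD: "finite ?D" using diagram_finite by simp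
  have cD: "card ?D = p" and conn: "cells_connected ?D" using assms(3) by (auto simp: remove_hook_def)
  have inj: "inj_on cont ?D" by (rule rim_inj[OF assms])
  let ?S = "cont ` ?D"
  have fS: "finite ?S" using fD by simp
  have neD: "?D \<noteq> {}" using conn by (simp add: cells_connected_def)
  then have neS: "?S \<noteq> {}" by simp
  have cS: "card ?S = p" using card_image[OF inj] cD by simp
  define m where "m = Min ?S"
  define M where "M = Max ?S"
  have mS: "m \<in> ?S" and MS: "M \<in> ?S" unfolding m_def M_def using fS neS by auto
  have sub: "?S \<subseteq> {m..M}" unfolding m_def M_def using fS by auto
  have sup: "{m..M} \<subseteq> ?S"
  proof
    fix v assume v: "v \<in> {m..M}"
    obtain c where c: "c \<in> ?D" "cont c = m" using mS by auto
    obtain d where d: "d \<in> ?D" "cont d = M" using MS by auto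
    have "(RR ?D)\<^sup>*\<^sup>* c d" using conn c d unfolding cells_connected_RR by blast
    from rim_interval[OF this c(1)] v c d have "\<exists>e\<in>?D. cont e = v" by auto
    then show "v \<in> ?S" by auto
  qed
  have Seq: "?S = {m..M}" using sub sup by blast
  have img: "{m..M} = (\<lambda>k. m + int k) ` {..<p}"
  proof -
    have "card {m..M} = p" using cS Seq by simp
    then have "nat (M - m + 1) = p" by simp
    then have Mp: "M = m + int p - 1" using \<open>m \<in> ?S\<close> sub by auto
    show ?thesis
    proof (intro set_eqI iffI)
      fix v assume "v \<in> {m..M}"
      then have "v = m + int (nat (v - m))" "nat (v - m) < p" using Mp by auto
      then show "v \<in> (\<lambda>k. m + int k) ` {..<p}" by blast
    next
      fix v assume "v \<in> (\<lambda>k. m + int k) ` {..<p}"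
      then show "v \<in> {m..M}" using Mp by auto
    qed
  qed
  have injk: "inj_on (\<lambda>k. m + int k) {..<p}" by (rule inj_onI) simp
  have "csum ?D = (\<Sum>v\<in>?S. v)" unfolding csum_def by (simp add: sum.reindex[OF inj])
  also have "\<dots> = (\<Sum>k<p. m + int k)" unfolding Seq img by (simp add: sum.reindex[OF injk])
  also have "\<dots> = int p * m + (\<Sum>k<p. int k)" by (simp add: sum.distrib)
  finally have "2 * csum ?D = 2 * int p * m + int p * (int p - 1)" using sum_lessThan_int[of p] by simp
  then show ?thesis by (intro exI[of _ m]) (simp add: algebra_simps)
qed

lemma chain_sum:
  assumes "(remove_hook p)\<^sup>*\<^sup>* la ga" "is_partition la"
  shows "\<exists>C t. 2 * (csum (diagram la) - csum (diagram ga)) = 2 * int p * C + int t * int p * (int p - 1)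
               \<and> card (diagram la) = card (diagram ga) + t * p"
  using assms
proof (induction rule: converse_rtranclp_induct)
  case base
  then show ?case by (intro exI[of _ 0]) simp
next
  case (step la mu)
  have pm: "is_partition mu" using step.hyps(1) by (simp add: remove_hook_def)
  obtain C t where IH: "2 * (csum (diagram mu) - csum (diagram ga)) = 2 * int p * C + int t * int p * (int p - 1)"
    "card (diagram mu) = card (diagram ga) + t * p" using step.IH[OF pm] by blast
  obtain c0 where c0: "2 * csum (diagram la - diagram mu) = int p * (2 * c0 + int p - 1)"
    using rim_sum[OF step.prems pm step.hyps(1)] by blast
  have sub: "diagram mu \<subseteq> diagram la" and cd: "card (diagram la - diagram mu) = p"
    using step.hyps(1) by (auto simp: remove_hook_def)
  have "csum (diagram la) = csum (diagram mu) + csum (diagram la - diagram mu)"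
    unfolding csum_def using sum.subset_diff[OF sub diagram_finite, of cont] by (simp add: add.commute)
  moreover have "card (diagram la) = card (diagram mu) + p"
    using card_Diff_subset[OF finite_subset[OF sub diagram_finite] sub] cd card_mono[OF diagram_finite sub] by simp
  ultimately show ?case using IH c0
    by (intro exI[of _ "C + c0"] exI[of _ "Suc t"]) (simp add: algebra_simps)
qed

lemma sum_seg_int: "2 * (\<Sum>k<x. int (g + k)) = int x * (2 * int g + int x - 1)"
  by (induction x) (simp_all add: algebra_simps)

lemma sum_seg_int_neg: "2 * (\<Sum>k<x. - int g - int k) = - (int x * (2 * int g + int x - 1))"
  by (induction x) (simp_all add: algebra_simps)

lemma star_csum:
  assumes "is_partition gm" "gm \<noteq> []"
  shows "2 * csum (diagram (star gm x y)) = 2 * csum (diagram gm)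
           + int x * (2 * int (gm!0) + int x - 1) - int y * (2 * int (length gm) + int y - 1)"
proof -
  let ?g = "gm!0" and ?l = "length gm"
  define R where "R = {(0::nat,j) | j. ?g \<le> j \<and> j < ?g + x}"
  define Cc where "Cc = {(i,0::nat) | i. ?l \<le> i \<and> i < ?l + y}"
  have l0: "0 < ?l" using assms(2) by simp
  have R: "R = (\<lambda>k. (0, ?g + k)) ` {..<x}"
  proof (intro set_eqI iffI)
    fix c assume "c \<in> R"
    then obtain j where j: "c = (0,j)" "?g \<le> j" "j < ?g + x" unfolding R_def by auto
    then have "c = (0, ?g + (j - ?g))" "j - ?g < x" by auto
    then show "c \<in> (\<lambda>k. (0, ?g + k)) ` {..<x}" by blast
  qed (auto simp: R_def)
  have C: "Cc = (\<lambda>k. (?l + k, 0)) ` {..<y}"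
  proof (intro set_eqI iffI)
    fix c assume "c \<in> Cc"
    then obtain i where i: "c = (i,0)" "?l \<le> i" "i < ?l + y" unfolding Cc_def by auto
    then have "c = (?l + (i - ?l), 0)" "i - ?l < y" by auto
    then show "c \<in> (\<lambda>k. (?l + k, 0)) ` {..<y}" by blast
  qed (auto simp: Cc_def)
  have injR: "inj_on (\<lambda>k. (0::nat, ?g + k)) {..<x}" by (rule inj_onI) auto
  have injC: "inj_on (\<lambda>k. (?l + k, 0::nat)) {..<y}" by (rule inj_onI) auto
  have d1: "diagram gm \<inter> R = {}" unfolding R_def by (auto simp: diagram_mem)
  have d2: "(diagram gm \<union> R) \<inter> Cc = {}" unfolding R_def Cc_def using l0 by (auto simp: diagram_mem)
  have fR: "finite R" "finite Cc" unfolding R C by auto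
  have "csum (diagram (star gm x y)) = csum (diagram gm) + csum R + csum Cc"
    unfolding star_diagram[OF assms] R_def[symmetric] Cc_def[symmetric] csum_def
    using d1 d2 fR diagram_finite by (simp add: sum.union_disjoint)
  moreover have "2 * csum R = int x * (2 * int ?g + int x - 1)"
    unfolding R csum_def sum.reindex[OF injR] using sum_seg_int[where x=x and g="?g"] by (simp add: cont_def)
  moreover have "2 * csum Cc = - (int y * (2 * int ?l + int y - 1))"
    unfolding C csum_def sum.reindex[OF injC] using sum_seg_int_neg[where x=y and g="?l"] by (simp add: cont_def)
  ultimately show ?thesis by (simp add: algebra_simps)
qed

theorem core_dvd_x:
  assumes "prime p" "is_partition gm" "gm \<noteq> []" "sum_list gm < p"
    and "(remove_hook p)\<^sup>*\<^sup>* (star gm x y) gm"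
  shows "p dvd x"
proof -
  let ?g = "gm!0" and ?l = "length gm"
  obtain C t where Ct: "2 * (csum (diagram (star gm x y)) - csum (diagram gm)) = 2 * int p * C + int t * int p * (int p - 1)"
    "card (diagram (star gm x y)) = card (diagram gm) + t * p"
    using chain_sum[OF assms(5) star_partition[OF assms(2,3)]] by blast
  have N: "x + y = t * p" using Ct(2) unfolding card_diagram star_sum[OF assms(2,3)] by simp
  have E: "int x * (2 * int ?g + int x - 1) - int y * (2 * int ?l + int y - 1) = 2 * int p * C + int t * int p * (int p - 1)"
    using Ct(1) star_csum[OF assms(2,3), of x y] by simp
  have Ny: "int y = int t * int p - int x" using N by (metis add_diff_cancel_left' of_nat_add of_nat_mult)
  define M where "M = int ?g + int ?l - 1"
  define K where "K = 2 * C + int t * (int p - 2 - 2 * int x + 2 * int ?l + int t * int p)"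
  have key: "2 * int x * M = int p * K"
    using E unfolding M_def K_def Ny by (simp add: algebra_simps)
  have l0: "0 < ?l" using assms(3) by simp
  have M0: "0 < M" "M < int p"
  proof -
    have "0 < ?g" using part_pos[OF assms(2) l0] .
    moreover have "1 \<le> int ?l" using l0 by (cases gm) auto
    ultimately show "0 < M" unfolding M_def by linarith
    have "?g + (?l - 1) \<le> sum_list gm"
    proof -
      have "sum_list gm = (\<Sum>i<?l. gm!i)" by (simp add: sum_list_sum_nth atLeast0LessThan)
      also have "\<dots> = gm!0 + (\<Sum>i\<in>{1..<?l}. gm!i)"
        using l0 by (simp add: sum.atLeast_Suc_lessThan atLeast0LessThan[symmetric])
      finally have s: "sum_list gm = gm!0 + (\<Sum>i\<in>{1..<?l}. gm!i)" .
      have "(\<Sum>i\<in>{1..<?l}. (1::nat)) \<le> (\<Sum>i\<in>{1..<?l}. gm!i)"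
        by (rule sum_mono) (use part_pos[OF assms(2)] in \<open>auto simp: Suc_le_eq\<close>)
      then show ?thesis using s by simp
    qed
    then show "M < int p" unfolding M_def using assms(4) l0 by linarith
  qed
  have pM: "\<not> int p dvd M" using M0 by (auto dest: zdvd_imp_le)
  have pi: "prime (int p)" using assms(1) by simp
  have "int p dvd 2 * int x * M" using key by simp
  then have d2x: "int p dvd 2 * int x" using pi pM by (metis prime_dvd_mult_iff mult.assoc)
  show ?thesis
  proof (cases "p = 2")
    case False
    then have "\<not> int p dvd 2"
      using assms(1) prime_ge_2_nat[OF assms(1)] by (auto dest: zdvd_imp_le)
    then have "int p dvd int x" using d2x pi by (metis prime_dvd_mult_iff)
    then show ?thesis by simp
  next
    case True
    have s1: "sum_list gm = 1"
      using assms(4) True part_pos[OF assms(2) l0] elem_le_sum_list[of 0 gm] l0 by linarith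
    have "int ?g + int ?l - 1 < 2" using M0(2) True unfolding M_def by simp
    then have "?g + ?l \<le> 2" by linarith
    then have gl: "?g = 1" "?l = 1" using part_pos[OF assms(2) l0] l0 by linarith+
    then have "M = 1" unfolding M_def by simp
    then have "2 * int x = 2 * K" using key True by simp
    then have "int x = K" by simp
    also have "K = 2 * (C + int t * (1 - int x + int t))" unfolding K_def using True gl by (simp add: algebra_simps)
    finally have ix: "int x = 2 * (C + int t * (1 - int x + int t))" .
    have "2 dvd int x" by (subst ix) (rule dvd_triv_left)
    then have "2 dvd x" by presburger
    then show ?thesis using True by simp
  qed
qed

lemma lin_ineq:
  assumes "c \<le> (m::nat)" "u \<le> w"
  shows "(m + w) * (c + u) \<le> (m + u) * (c + w)"
proof -
  obtain a where a: "m = c + a" using assms(1) le_Suc_ex by blast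
  obtain b where b: "w = u + b" using assms(2) le_Suc_ex by blast
  show ?thesis unfolding a b by (simp add: algebra_simps)
qed

lemma rank_prod:
  "finite E \<Longrightarrow> card E = n \<Longrightarrow> \<forall>e\<in>E. 1 \<le> e \<Longrightarrow> u \<le> (w::nat) \<Longrightarrow>
   (\<Prod>e\<in>E. e + w) * (\<Prod>j\<in>{1..n}. j + u) \<le> (\<Prod>e\<in>E. e + u) * (\<Prod>j\<in>{1..n}. j + w)"
proof (induction n arbitrary: E)
  case 0
  then have "E = {}" by simp
  then show ?case by simp
next
  case (Suc n)
  have ne: "E \<noteq> {}" using Suc.prems(2) by auto
  define m where "m = Max E"
  have mE: "m \<in> E" unfolding m_def using Suc.prems(1) ne by simp
  have le: "e \<le> m" if "e \<in> E" for e unfolding m_def using Suc.prems(1) that by simp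
  have "E \<subseteq> {1..m}" using le Suc.prems(3) by auto
  then have "card E \<le> card {1..m}" by (rule card_mono[rotated]) simp
  then have nm: "Suc n \<le> m" using Suc.prems(2) by simp
  have fE': "finite (E - {m})" using Suc.prems(1) by simp
  have cE': "card (E - {m}) = n" using Suc.prems(2) mE Suc.prems(1) by simp
  have IH: "(\<Prod>e\<in>E-{m}. e + w) * (\<Prod>j\<in>{1..n}. j + u) \<le> (\<Prod>e\<in>E-{m}. e + u) * (\<Prod>j\<in>{1..n}. j + w)"
    using Suc.IH[OF fE' cE'] Suc.prems(3,4) by auto
  have pE: "(\<Prod>e\<in>E. e + z) = (m + z) * (\<Prod>e\<in>E-{m}. e + z)" for z
    using prod.remove[OF Suc.prems(1) mE] by simp
  have pN: "(\<Prod>j\<in>{1..Suc n}. j + z) = (Suc n + z) * (\<Prod>j\<in>{1..n}. j + z)" for z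
  proof -
    have "{1..Suc n} = insert (Suc n) {1..n}" by auto
    then show ?thesis by simp
  qed
  have sc: "(m + w) * (Suc n + u) \<le> (m + u) * (Suc n + w)" by (rule lin_ineq[OF nm Suc.prems(4)])
  have "(\<Prod>e\<in>E. e + w) * (\<Prod>j\<in>{1..Suc n}. j + u) =
        ((m + w) * (Suc n + u)) * ((\<Prod>e\<in>E-{m}. e + w) * (\<Prod>j\<in>{1..n}. j + u))"
    unfolding pE pN by (simp only: ac_simps)
  also have "\<dots> \<le> ((m + u) * (Suc n + w)) * ((\<Prod>e\<in>E-{m}. e + u) * (\<Prod>j\<in>{1..n}. j + w))"
    by (rule mult_le_mono[OF sc IH])
  also have "\<dots> = (\<Prod>e\<in>E. e + u) * (\<Prod>j\<in>{1..Suc n}. j + w)"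
    unfolding pE pN by (simp only: ac_simps)
  finally show ?case .
qed

lemma fact_ratio_mono:
  assumes "c \<le> (a::nat)"
  shows "fact a * fact (c + d) \<le> fact (a + d) * (fact c :: nat)"
proof (induction d)
  case 0 then show ?case by simp
next
  case (Suc d)
  have "fact a * fact (c + Suc d) = (Suc (c + d)) * (fact a * fact (c + d) :: nat)" by (simp add: algebra_simps)
  also have "\<dots> \<le> (Suc (a + d)) * (fact (a + d) * fact c)"
    by (rule mult_le_mono[OF _ Suc.IH]) (use assms in simp)
  also have "\<dots> = fact (a + Suc d) * fact c" by (simp add: algebra_simps)
  finally show ?case .
qed

lemma fact_ratio_strict:
  assumes "z < (x::nat)" "0 < d"
  shows "fact x * fact (z + d) < fact (x + d) * (fact z :: nat)"
  using assms(2)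
proof (induction d)
  case 0 then show ?case by simp
next
  case (Suc d)
  show ?case
  proof (cases "d = 0")
    case True
    have "fact x * fact (z + 1) = Suc z * (fact x * fact z :: nat)" by (simp add: algebra_simps)
    also have "\<dots> < Suc x * (fact x * fact z)"
      using assms(1) by (intro mult_strict_right_mono) (auto simp: fact_gt_zero)
    also have "\<dots> = fact (x + 1) * fact z" by (simp add: algebra_simps)
    finally show ?thesis using True by simp
  next
    case False
    then have IH: "fact x * fact (z + d) < fact (x + d) * (fact z :: nat)" using Suc.IH by simp
    have "fact x * fact (z + Suc d) = Suc (z + d) * (fact x * fact (z + d) :: nat)" by (simp add: algebra_simps)
    also have "\<dots> < Suc (x + d) * (fact (x + d) * fact z)"
      by (rule mult_le_less_imp_less[OF _ IH]) (use assms(1) in auto)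
    also have "\<dots> = fact (x + Suc d) * fact z" by (simp add: algebra_simps)
    finally show ?thesis .
  qed
qed

lemma PiF: "(\<Prod>j\<in>{1..r}. j + u) * fact u = (fact (u + r) :: nat)"
proof (induction r)
  case 0 then show ?case by simp
next
  case (Suc r)
  have "{1..Suc r} = insert (Suc r) {1..r}" by auto
  then have "(\<Prod>j\<in>{1..Suc r}. j + u) = (Suc r + u) * (\<Prod>j\<in>{1..r}. j + u)" by simp
  then have "(\<Prod>j\<in>{1..Suc r}. j + u) * fact u = (Suc r + u) * ((\<Prod>j\<in>{1..r}. j + u) * fact u)"
    by (simp only: mult.assoc)
  also have "\<dots> = (Suc r + u) * fact (u + r)" using Suc by simp
  also have "\<dots> = fact (u + Suc r)" by (simp add: algebra_simps)
  finally show ?case .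
qed

lemma char_degree_exact:
  assumes "is_partition la"
  shows "char_degree la * HP la = fact (sum_list la)"
  using HP_dvd_fact[OF assms] unfolding char_degree_def HP_def[symmetric] by simp

lemma b0_le_sum:
  assumes "is_partition gm" "gm \<noteq> []"
  shows "b0 gm \<le> sum_list gm"
proof -
  let ?l = "length gm"
  have l0: "0 < ?l" using assms(2) by simp
  have "sum_list gm = (\<Sum>i<?l. gm!i)" by (simp add: sum_list_sum_nth atLeast0LessThan)
  also have "\<dots> = gm!0 + (\<Sum>i\<in>{1..<?l}. gm!i)"
    using l0 by (simp add: sum.atLeast_Suc_lessThan atLeast0LessThan[symmetric])
  finally have s: "sum_list gm = gm!0 + (\<Sum>i\<in>{1..<?l}. gm!i)" .
  have "(\<Sum>i\<in>{1..<?l}. (1::nat)) \<le> (\<Sum>i\<in>{1..<?l}. gm!i)"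
    by (rule sum_mono) (use part_pos[OF assms(1)] in \<open>auto simp: Suc_le_eq\<close>)
  then show ?thesis using s l0 unfolding b0_def by simp
qed

lemma b0_ge_len:
  assumes "is_partition gm" "gm \<noteq> []"
  shows "length gm \<le> b0 gm"
  using part_pos[OF assms(1), of 0] assms(2) unfolding b0_def by simp

theorem HP_star_mono:
  assumes gm: "is_partition gm" "gm \<noteq> []"
    and x: "x1 < x2" "x1 + y1 = x2 + y2" "y2 + length gm \<le> x1"
  shows "HP (star gm x1 y1) < HP (star gm x2 y2)"
proof (rule ccontr)
  assume "\<not> ?thesis"
  then have HH: "HP (star gm x2 y2) \<le> HP (star gm x1 y1)" by simp
  define b where "b = b0 gm"
  define B where "B = Bp gm"
  define r where "r = card B"
  define d where "d = x2 - x1"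
  have r: "r = length gm - 1" unfolding r_def B_def by (rule card_Bp[OF gm(1)])
  have fB: "finite B" unfolding B_def by (rule Bp_finite)
  have B1: "1 \<le> c" "c < b" if "c \<in> B" for c using Bp_props[OF gm] that unfolding B_def b_def by auto
  have lb: "length gm \<le> b" unfolding b_def by (rule b0_ge_len[OF gm])
  have l0: "0 < length gm" using gm(2) by simp
  have d0: "0 < d" "x2 = x1 + d" "y1 = y2 + d" unfolding d_def using x by auto
  define P where "P y = (\<Prod>c\<in>B. c + y)" for y
  define Q where "Q x = (\<Prod>c\<in>B. b - c + x)" for x
  define Pi where "Pi u = (\<Prod>j\<in>{1..r}. j + u)" for u
  define FB where "FB = (\<Prod>c\<in>B. fact (c - 1) :: nat)"
  have KF1: "HP (star gm x1 y1) * Dl B * Q x1 = (b + x1 + y1) * P y1 * fact y1 * fact (b + x1 - 1) * FB"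
    unfolding P_def Q_def FB_def b_def B_def by (rule KF[OF gm])
  have KF2: "HP (star gm x2 y2) * Dl B * Q x2 = (b + x1 + y1) * P y2 * fact y2 * fact (b + x2 - 1) * FB"
    unfolding P_def Q_def FB_def b_def B_def using KF[OF gm, of x2 y2] x(2) by simp
  have B1': "\<forall>c\<in>B. 1 \<le> c \<and> c < b" using B1 by blast
  have Qpos: "0 < Q x" for x unfolding Q_def using B1' by (intro prod_pos) auto
  have Ppos: "0 < P y" for y unfolding P_def using B1' by (intro prod_pos) auto
  have FBpos: "0 < FB" unfolding FB_def by (intro prod_pos) auto
  have "0 < b" using lb l0 by linarith
  then have Kpos: "0 < (b + x1 + y1) * FB" using FBpos by simp
  have "(b + x1 + y1) * FB * (P y2 * fact y2 * fact (b + x2 - 1) * Q x1) =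
        HP (star gm x2 y2) * Dl B * Q x2 * Q x1" using KF2 by (simp only: ac_simps)
  also have "\<dots> \<le> HP (star gm x1 y1) * Dl B * Q x2 * Q x1" using HH by simp
  also have "\<dots> = (HP (star gm x1 y1) * Dl B * Q x1) * Q x2" by (simp only: ac_simps)
  also have "\<dots> = ((b + x1 + y1) * P y1 * fact y1 * fact (b + x1 - 1) * FB) * Q x2" unfolding KF1 ..
  also have "\<dots> = (b + x1 + y1) * FB * (P y1 * fact y1 * fact (b + x1 - 1) * Q x2)" by (simp only: ac_simps)
  finally have s1: "P y2 * fact y2 * fact (b + x2 - 1) * Q x1 \<le> P y1 * fact y1 * fact (b + x1 - 1) * Q x2"
    using Kpos by simp
  have RP: "P y1 * Pi y2 \<le> P y2 * Pi y1"
    unfolding P_def Pi_def r_def by (rule rank_prod[OF fB refl]) (use B1 d0 in auto)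
  define C where "C = (\<lambda>c. b - c) ` B"
  have injC: "inj_on (\<lambda>c. b - c) B" by (rule inj_onI) (use B1 in fastforce)
  have cC: "card C = r" unfolding C_def r_def by (rule card_image[OF injC])
  have QC: "Q x = (\<Prod>e\<in>C. e + x)" for x unfolding Q_def C_def by (simp add: prod.reindex[OF injC])
  have RQ: "Q x2 * Pi x1 \<le> Q x1 * Pi x2"
    unfolding QC Pi_def cC[symmetric] by (rule rank_prod[OF _ refl]) (use B1' fB d0 in \<open>auto simp: C_def\<close>)
  have PiFu: "Pi u * fact u = fact (u + r)" for u unfolding Pi_def by (rule PiF)
  have "(P y1 * Q x2) * (Pi y2 * fact y2 * fact (b + x2 - 1) * Pi x1) =
        (P y1 * Pi y2) * (Q x2 * Pi x1) * (fact y2 * fact (b + x2 - 1))" by (simp only: ac_simps)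
  also have "\<dots> \<le> (P y2 * Pi y1) * (Q x1 * Pi x2) * (fact y2 * fact (b + x2 - 1))"
    by (intro mult_le_mono RP RQ le_refl)
  also have "\<dots> = (P y2 * fact y2 * fact (b + x2 - 1) * Q x1) * (Pi y1 * Pi x2)" by (simp only: ac_simps)
  also have "\<dots> \<le> (P y1 * fact y1 * fact (b + x1 - 1) * Q x2) * (Pi y1 * Pi x2)"
    by (intro mult_le_mono s1 le_refl)
  also have "\<dots> = (P y1 * Q x2) * (Pi y1 * fact y1 * fact (b + x1 - 1) * Pi x2)" by (simp only: ac_simps)
  finally have s2: "Pi y2 * fact y2 * fact (b + x2 - 1) * Pi x1 \<le> Pi y1 * fact y1 * fact (b + x1 - 1) * Pi x2"
    using Ppos[of y1] Qpos[of x2] by simp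
  have "fact (y2 + r) * fact (b + x2 - 1) * fact (x1 + r) * fact x2 =
        (Pi y2 * fact y2 * fact (b + x2 - 1) * Pi x1) * (fact x1 * (fact x2 :: nat))"
    unfolding PiFu[symmetric] by (simp only: ac_simps)
  also have "\<dots> \<le> (Pi y1 * fact y1 * fact (b + x1 - 1) * Pi x2) * (fact x1 * fact x2)"
    by (intro mult_le_mono s2 le_refl)
  also have "\<dots> = fact (y1 + r) * fact (b + x1 - 1) * fact (x2 + r) * fact x1"
    unfolding PiFu[symmetric] by (simp only: ac_simps)
  finally have s3: "fact (y2 + r) * fact (b + x2 - 1) * fact (x1 + r) * fact x2 \<le>
                    fact (y1 + r) * fact (b + x1 - 1) * fact (x2 + r) * (fact x1 :: nat)" .
  have FR: "fact (b + x1 - 1) * fact (x1 + r + d) \<le> fact (b + x1 - 1 + d) * (fact (x1 + r) :: nat)"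
    by (rule fact_ratio_mono) (use lb r l0 in linarith)
  have FS: "fact x1 * fact (y2 + r + d) < fact (x1 + d) * (fact (y2 + r) :: nat)"
    by (rule fact_ratio_strict) (use x(3) r l0 d0 in linarith)+
  have e1: "b + x1 - 1 + d = b + x2 - 1" "x1 + r + d = x2 + r" "y2 + r + d = y1 + r" "x1 + d = x2"
    using d0 lb l0 by linarith+
  have "fact (y1 + r) * fact (b + x1 - 1) * fact (x2 + r) * fact x1 =
        (fact (b + x1 - 1) * fact (x1 + r + d)) * (fact x1 * (fact (y2 + r + d) :: nat))"
    unfolding e1 by (simp only: ac_simps)
  also have "\<dots> < (fact (b + x1 - 1 + d) * fact (x1 + r)) * (fact (x1 + d) * fact (y2 + r))"
    by (rule mult_le_less_imp_less[OF FR FS]) (simp_all add: fact_gt_zero)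
  also have "\<dots> = fact (y2 + r) * fact (b + x2 - 1) * fact (x1 + r) * fact x2"
    unfolding e1 by (simp only: ac_simps)
  finally show False using s3 by simp
qed

theorem HP_star_mono_nil:
  assumes "0 < x1" "x1 < x2" "x1 + y1 = x2 + y2" "y1 + 1 < x1"
  shows "HP (star [] x1 y1) < HP (star [] x2 y2)"
proof -
  have H: "HP (star [] x y) = (x + y) * fact y * fact (x - 1)" if "0 < x" for x y
  proof -
    have "HP (star [1] (x - 1) y) * Dl (Bp [1]) * (\<Prod>c\<in>Bp [1]. b0 [1] - c + (x - 1)) =
          (b0 [1] + (x - 1) + y) * (\<Prod>c\<in>Bp [1]. c + y) * fact y * fact (b0 [1] + (x - 1) - 1) * (\<Prod>c\<in>Bp [1]. fact (c - 1))"
      by (rule KF[OF part_1]) simp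
    moreover have "Bp [1] = {}" "b0 [1] = 1" by (simp_all add: Bp_def b0_def)
    ultimately show ?thesis using star_nil[OF that] that by simp
  qed
  define d where "d = x2 - x1"
  have d0: "0 < d" "x2 - 1 = (x1 - 1) + d" "y1 = y2 + d" unfolding d_def using assms by auto
  have FS: "fact (x1 - 1) * fact (y2 + d) < fact (x1 - 1 + d) * (fact y2 :: nat)"
    by (rule fact_ratio_strict) (use assms d0 in linarith)+
  have "(x1 + y1) * fact y1 * fact (x1 - 1) < (x1 + y1) * fact y2 * fact (x2 - 1)"
    using FS assms d0 by (simp add: ac_simps)
  then show ?thesis using H[OF assms(1)] H[of x2 y2] assms by simp
qed

theorem padic_star:
  assumes p: "prime p" and gm: "is_partition gm" "gm \<noteq> []" "sum_list gm < p"
    and xy: "p dvd x" "p dvd y" "\<not> p dvd ((x + y) choose x)"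
  shows "\<not> p dvd char_degree (star gm x y)"
proof
  assume pD: "p dvd char_degree (star gm x y)"
  define m where "m = sum_list gm"
  define N where "N = x + y"
  define b where "b = b0 gm"
  define B where "B = Bp gm"
  define D where "D = char_degree (star gm x y)"
  define H where "H = HP (star gm x y)"
  define P where "P = (\<Prod>c\<in>B. c + y)"
  define Q where "Q = (\<Prod>c\<in>B. b - c + x)"
  define FB where "FB = (\<Prod>c\<in>B. fact (c - 1) :: nat)"
  define W where "W = (\<Prod>j\<in>{1..b - 1}. j + x)"
  define V where "V = (\<Prod>j\<in>{1..m}. j + N)"
  have fB: "finite B" unfolding B_def by (rule Bp_finite)
  have B1: "1 \<le> c" "c < b" if "c \<in> B" for c using Bp_props[OF gm(1,2)] that unfolding B_def b_def by auto
  have bm: "b \<le> m" unfolding b_def m_def by (rule b0_le_sum[OF gm(1,2)])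
  have b1: "1 \<le> b" using b0_ge_len[OF gm(1,2)] gm(2) unfolding b_def by (cases gm) auto
  have mp: "m < p" using gm(3) unfolding m_def .
  have exact: "D * H = fact (m + N)"
    unfolding D_def H_def m_def N_def using char_degree_exact[OF star_partition[OF gm(1,2)], of x y]
      star_sum[OF gm(1,2)] by (simp add: add.assoc)
  have kf: "H * Dl B * Q = (b + x + y) * P * fact y * fact (b + x - 1) * FB"
    unfolding H_def P_def Q_def FB_def b_def B_def by (rule KF[OF gm(1,2)])
  have fbx: "fact (b + x - 1) = W * fact x" unfolding W_def using PiF[where r="b - 1" and u=x] b1 by (simp add: add.commute)
  have fn: "fact (m + N) = V * fact N" unfolding V_def using PiF[where r=m and u=N] by (simp add: add.commute)
  have fN: "fact N = fact x * fact y * (N choose x)"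
    unfolding N_def using binomial_fact_lemma[of x "x+y"] by simp
  have "D * ((b + x + y) * P * W * FB) * (fact x * fact y) = (N choose x) * V * (Dl B * Q) * (fact x * fact y)"
  proof -
    have "D * ((b + x + y) * P * W * FB) * (fact x * fact y) = D * ((b + x + y) * P * fact y * fact (b + x - 1) * FB)"
      unfolding fbx by (simp only: ac_simps)
    also have "\<dots> = D * H * (Dl B * Q)" unfolding kf[symmetric] by (simp only: ac_simps)
    also have "\<dots> = (N choose x) * V * (Dl B * Q) * (fact x * fact y)"
      unfolding exact fn fN by (simp only: ac_simps)
    finally show ?thesis .
  qed
  then have eq: "D * ((b + x + y) * P * W * FB) = (N choose x) * V * (Dl B * Q)" by simp
  have "p dvd (N choose x) * V * (Dl B * Q)" unfolding eq[symmetric] using pD unfolding D_def by simp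
  moreover have "\<not> p dvd V"
  proof
    assume "p dvd V"
    then have "\<exists>j\<in>{1..m}. p dvd j + N" unfolding V_def using prime_dvd_prod_iff[OF _ p, of "{1..m}" "\<lambda>j. j + N"] by simp
    then obtain j where j: "j \<in> {1..m}" "p dvd j + N" by blast
    have "p dvd N" unfolding N_def using xy by simp
    then have "p dvd j" using j(2) by (simp add: dvd_add_left_iff)
    then show False using j mp by (auto dest: dvd_imp_le)
  qed
  moreover have "\<not> p dvd Dl B"
  proof
    assume "p dvd Dl B"
    then have "\<exists>u\<in>B. p dvd (\<Prod>v\<in>{v\<in>B. v<u}. (u - v))"
      unfolding Dl_def using prime_dvd_prod_iff[OF fB p] by simp
    then obtain u where u: "u \<in> B" "p dvd (\<Prod>v\<in>{v\<in>B. v<u}. (u - v))" by blast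
    have "finite {v\<in>B. v<u}" using fB by simp
    then have "\<exists>v\<in>{v\<in>B. v<u}. p dvd u - v" using u(2) prime_dvd_prod_iff[OF _ p] by blast
    then obtain v where "v \<in> B" "v < u" "p dvd u - v" by blast
    then have uv: "u \<in> B" "v \<in> B" "v < u" "p dvd u - v" using u by auto
    have "u - v < p" using B1[OF uv(1)] bm mp by linarith
    then show False using uv by (auto dest: dvd_imp_le)
  qed
  moreover have "\<not> p dvd Q"
  proof
    assume "p dvd Q"
    then obtain c where c: "c \<in> B" "p dvd b - c + x" unfolding Q_def using prime_dvd_prod_iff[OF fB p] by auto
    then have "p dvd b - c" using xy by (metis dvd_add_left_iff)
    moreover have "0 < b - c" "b - c < p" using B1[OF c(1)] bm mp by linarith+
    ultimately show False by (auto dest: dvd_imp_le)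
  qed
  ultimately show False using xy(3) p unfolding N_def by (simp add: prime_dvd_mult_iff)
qed

theorem padic_nil:
  assumes p: "prime p" and x: "0 < x" and c: "\<not> p dvd ((x + y - 1) choose y)"
  shows "\<not> p dvd char_degree (star [] x y)"
proof -
  have H: "HP (star [] x y) = (x + y) * fact y * fact (x - 1)"
  proof -
    have "HP (star [1] (x - 1) y) * Dl (Bp [1]) * (\<Prod>c\<in>Bp [1]. b0 [1] - c + (x - 1)) =
          (b0 [1] + (x - 1) + y) * (\<Prod>c\<in>Bp [1]. c + y) * fact y * fact (b0 [1] + (x - 1) - 1) * (\<Prod>c\<in>Bp [1]. fact (c - 1))"
      by (rule KF[OF part_1]) simp
    moreover have "Bp [1] = {}" "b0 [1] = 1" by (simp_all add: Bp_def b0_def)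
    ultimately show ?thesis using star_nil[OF x] x by simp
  qed
  have sp: "is_partition (star [] x y)" using star_nil[OF x] star_partition[OF part_1] by simp
  have ss: "sum_list (star [] x y) = x + y" using star_nil[OF x] star_sum[OF part_1] x by simp
  have ex: "char_degree (star [] x y) * ((x + y) * fact y * fact (x - 1)) = fact (x + y)"
    using char_degree_exact[OF sp] H ss by simp
  have "fact (x + y) = (x + y) * (fact (x + y - 1) :: nat)" using x by (cases "x + y") auto
  also have "fact (x + y - 1) = fact y * fact (x - 1) * ((x + y - 1) choose y)"
    using binomial_fact_lemma[of y "x + y - 1"] x by (simp add: ac_simps)
  finally have "char_degree (star [] x y) * ((x + y) * fact y * fact (x - 1)) =
                ((x + y - 1) choose y) * ((x + y) * fact y * fact (x - 1))"
    using ex by (simp only: ac_simps)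
  then have "char_degree (star [] x y) = (x + y - 1) choose y" using x by simp
  then show ?thesis using c by simp
qed

lemma geom_digits: "(\<Sum>i<j. (p - 1) * p^i) = p^j - (1::nat)" if "1 \<le> p"
proof (induction j)
  case 0 then show ?case by simp
next
  case (Suc j)
  have t: "p^j \<ge> 1" using that by simp
  have "p * p^j \<ge> p^j" using that by simp
  moreover have "(p - 1) * p^j = p * p^j - p^j" by (simp add: diff_mult_distrib)
  ultimately have "p^j - 1 + (p - 1) * p^j = p * p^j - 1" using t by linarith
  then show ?case using Suc by simp
qed

lemma digit_sum_less:
  assumes "\<forall>i\<in>A. c i < (p::nat)" "A \<subseteq> {..<j}" "0 < p"
  shows "(\<Sum>i\<in>A. c i * p^i) < p^j"
proof -
  have p1: "1 \<le> p" using assms(3) by simp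
  have "(\<Sum>i\<in>A. c i * p^i) \<le> (\<Sum>i\<in>A. (p - 1) * p^i)"
    by (rule sum_mono) (use assms(1) in \<open>auto intro: mult_le_mono1\<close>)
  also have "\<dots> \<le> (\<Sum>i<j. (p - 1) * p^i)"
    by (rule sum_mono2) (use assms(2) in auto)
  also have "\<dots> = p^j - 1" by (rule geom_digits[OF p1])
  also have "\<dots> < p^j" using p1 by simp
  finally show ?thesis .
qed

lemma digit_sum_mod:
  assumes "finite A" "\<forall>i\<in>A. c i < (p::nat)" "0 < p"
  shows "(\<Sum>i\<in>A. c i * p^i) mod p^j = (\<Sum>i\<in>{i\<in>A. i < j}. c i * p^i)"
proof -
  have A: "A = {i\<in>A. i < j} \<union> {i\<in>A. \<not> i < j}" by auto
  have split: "(\<Sum>i\<in>A. c i * p^i) = (\<Sum>i\<in>{i\<in>A. i < j}. c i * p^i) + (\<Sum>i\<in>{i\<in>A. \<not> i < j}. c i * p^i)"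
    by (subst A, rule sum.union_disjoint) (use assms(1) in auto)
  have d: "p^j dvd (\<Sum>i\<in>{i\<in>A. \<not> i < j}. c i * p^i)"
    by (rule dvd_sum) (auto simp: le_imp_power_dvd not_less)
  have l: "(\<Sum>i\<in>{i\<in>A. i < j}. c i * p^i) < p^j" by (rule digit_sum_less) (use assms(2,3) in auto)
  obtain t where t: "(\<Sum>i\<in>{i\<in>A. \<not> i < j}. c i * p^i) = p^j * t" using d by (auto elim!: dvdE)
  show ?thesis unfolding split t using l by simp
qed

lemma sub_mod:
  assumes "x \<le> (N::nat)" "x mod q \<le> N mod q"
  shows "(N - x) mod q = N mod q - x mod q"
proof (cases "q = 0")
  case True then show ?thesis by simp
next
  case False
  have "N = x + (N - x)" using assms(1) by simp
  have "N div q = x div q + (N - x) div q" by (rule div_no_carry) (use assms False in auto)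
  moreover have "N = q * (N div q) + N mod q" "x = q * (x div q) + x mod q" "N - x = q * ((N - x) div q) + (N - x) mod q"
    by simp_all
  ultimately show ?thesis using assms(1) by (metis add_diff_cancel_left' diff_add_inverse2 diff_diff_left distrib_left)
qed

lemma mod_minus1:
  assumes "1 \<le> y mod (q::nat)"
  shows "(y - 1) mod q = y mod q - 1"
proof (cases "q = 0")
  case True then show ?thesis by simp
next
  case False
  then have q: "0 < q" by simp
  have "y = q * (y div q) + y mod q" by simp
  then have "y - 1 = q * (y div q) + (y mod q - 1)" using assms by linarith
  moreover have "y mod q - 1 < q" using q by (simp add: less_imp_diff_less)
  ultimately show ?thesis by (metis mod_mult_self2 mod_less add.commute)
qed

section \<open>Families of characters\<close>

definition Zs :: "nat \<Rightarrow> (nat \<Rightarrow> nat) \<Rightarrow> (nat \<Rightarrow> nat) set" where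
  "Zs k a = PiE {1..k} (\<lambda>i. if i = k then {j. a k < 2 * j \<and> j \<le> a k} else {..a i})"

definition Xs :: "nat \<Rightarrow> nat \<Rightarrow> (nat \<Rightarrow> nat) \<Rightarrow> nat" where
  "Xs p k z = (\<Sum>i\<in>{1..k}. z i * p^i)"

lemma card_Zs:
  assumes "1 \<le> k"
  shows "card (Zs k a) = ((a k + 1) div 2) * (\<Prod>i\<in>{1..k-1}. (a i + 1))"
proof -
  have "card (Zs k a) = (\<Prod>i\<in>{1..k}. card (if i = k then {j. a k < 2 * j \<and> j \<le> a k} else {..a i}))"
    unfolding Zs_def by (rule card_PiE) simp
  also have "{1..k} = insert k {1..k-1}" using assms by auto
  also have "(\<Prod>i\<in>insert k {1..k-1}. card (if i = k then {j. a k < 2 * j \<and> j \<le> a k} else {..a i})) =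
             card {j. a k < 2 * j \<and> j \<le> a k} * (\<Prod>i\<in>{1..k-1}. card (if i = k then {j. a k < 2 * j \<and> j \<le> a k} else {..a i}))"
    using assms by simp
  also have "(\<Prod>i\<in>{1..k-1}. card (if i = k then {j. a k < 2 * j \<and> j \<le> a k} else {..a i})) = (\<Prod>i\<in>{1..k-1}. a i + 1)"
    by (rule prod.cong) auto
  also have "card {j. a k < 2 * j \<and> j \<le> a k} = (a k + 1) div 2"
  proof -
    have "{j. a k < 2 * j \<and> j \<le> a k} = {a k div 2 + 1..a k}" by auto
    then show ?thesis by simp
  qed
  finally show ?thesis by simp
qed

context
  fixes p k :: nat and a :: "nat \<Rightarrow> nat"
  assumes p: "prime p" and k: "1 \<le> k" and ak: "\<forall>i\<le>k. a i < p" and akn: "a k \<noteq> 0"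
begin

definition "NN = (\<Sum>i\<in>{1..k}. a i * p^i)"

lemma p0: "0 < p" using p prime_gt_0_nat by blast
lemma p2: "2 \<le> p" using p prime_ge_2_nat by blast

lemma Zs_props:
  assumes "z \<in> Zs k a"
  shows "\<forall>i\<in>{1..k}. z i \<le> a i" "\<forall>i\<in>{1..k}. z i < p" "a k < 2 * z k"
proof -
  show le: "\<forall>i\<in>{1..k}. z i \<le> a i" using assms unfolding Zs_def by (auto simp: PiE_iff split: if_splits)
  show "\<forall>i\<in>{1..k}. z i < p" using le ak by (meson atLeastAtMost_iff le_less_trans)
  have "z k \<in> (if k = k then {j. a k < 2 * j \<and> j \<le> a k} else {..a k})"
    using PiE_mem[OF assms[unfolded Zs_def], of k] k by simp
  then show "a k < 2 * z k" by simp
qed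

lemma a_lt: "\<forall>i\<in>{1..k}. a i < p" using ak by auto

lemma NN_mod: "NN mod p^j = (\<Sum>i\<in>{i\<in>{1..k}. i < j}. a i * p^i)"
  unfolding NN_def by (rule digit_sum_mod[OF _ a_lt p0]) simp

lemma Xs_mod: "z \<in> Zs k a \<Longrightarrow> Xs p k z mod p^j = (\<Sum>i\<in>{i\<in>{1..k}. i < j}. z i * p^i)"
  unfolding Xs_def by (rule digit_sum_mod[OF _ Zs_props(2) p0]) simp_all

lemma Xs_dig: "z \<in> Zs k a \<Longrightarrow> Xs p k z mod p^j \<le> NN mod p^j"
  unfolding Xs_mod NN_mod using Zs_props(1) by (intro sum_mono mult_le_mono1) auto

lemma Xs_le: "z \<in> Zs k a \<Longrightarrow> Xs p k z \<le> NN"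
  unfolding Xs_def NN_def using Zs_props(1) by (intro sum_mono mult_le_mono1) auto

lemma dvd_NN: "p dvd NN"
  unfolding NN_def by (rule dvd_sum) (auto intro: dvd_mult dvd_power)

lemma dvd_Xs: "p dvd Xs p k z"
  unfolding Xs_def by (rule dvd_sum) (auto intro: dvd_mult dvd_power)

lemma Xs_big:
  assumes "z \<in> Zs k a"
  shows "NN - Xs p k z + p \<le> Xs p k z"
proof -
  note zp = Zs_props[OF assms]
  have kk: "{1..k} = insert k {1..k-1}" "k \<notin> {1..k-1}" using k by auto
  have "NN - Xs p k z = (\<Sum>i\<in>{1..k}. (a i - z i) * p^i)"
    unfolding NN_def Xs_def using zp(1) by (subst sum_subtractf_nat[symmetric]) (auto simp: diff_mult_distrib)
  also have "\<dots> = (a k - z k) * p^k + (\<Sum>i\<in>{1..k-1}. (a i - z i) * p^i)" unfolding kk(1) using kk(2) by simp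
  also have "(\<Sum>i\<in>{1..k-1}. (a i - z i) * p^i) < p^k"
  proof (rule digit_sum_less)
    show "\<forall>i\<in>{1..k-1}. a i - z i < p"
    proof
      fix i assume "i \<in> {1..k-1}"
      then have "i \<in> {1..k}" by auto
      then show "a i - z i < p" using a_lt by (meson le_less_trans diff_le_self)
    qed
  qed (use p0 in auto)
  finally have "NN - Xs p k z < (a k - z k + 1) * p^k" by (simp add: algebra_simps)
  also have "\<dots> \<le> z k * p^k" using zp(3) zp(1) k by (intro mult_le_mono1) auto
  also have "\<dots> \<le> Xs p k z" unfolding Xs_def using k by (intro member_le_sum) auto
  finally have lt: "NN - Xs p k z < Xs p k z" .
  have "p dvd Xs p k z - (NN - Xs p k z)"
    using dvd_Xs dvd_NN Xs_le[OF assms] by (intro dvd_diff_nat) (auto intro: dvd_diff_nat)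
  then have "p \<le> Xs p k z - (NN - Xs p k z)" using lt by (intro dvd_imp_le) auto
  then show ?thesis using lt by linarith
qed

lemma Xs_inj: "inj_on (Xs p k) (Zs k a)"
proof (rule inj_onI)
  fix z1 z2 assume z1: "z1 \<in> Zs k a" and z2: "z2 \<in> Zs k a" and eq: "Xs p k z1 = Xs p k z2"
  have dig: "z i = (Xs p k z mod p^(Suc i) - Xs p k z mod p^i) div p^i" if "z \<in> Zs k a" "i \<in> {1..k}" for z i
  proof -
    have "{l\<in>{1..k}. l < Suc i} = insert i {l\<in>{1..k}. l < i}" using that(2) by auto
    then have "Xs p k z mod p^(Suc i) = z i * p^i + Xs p k z mod p^i"
      unfolding Xs_mod[OF that(1)] by simp
    then show ?thesis using p0 by simp
  qed
  show "z1 = z2"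
  proof (rule PiE_ext)
    show "z1 \<in> Pi\<^sub>E {1..k} (\<lambda>i. if i = k then {j. a k < 2 * j \<and> j \<le> a k} else {..a i})" using z1 unfolding Zs_def .
    show "z2 \<in> Pi\<^sub>E {1..k} (\<lambda>i. if i = k then {j. a k < 2 * j \<and> j \<le> a k} else {..a i})" using z2 unfolding Zs_def .
    fix i assume "i \<in> {1..k}"
    then show "z1 i = z2 i" using dig[OF z1] dig[OF z2] eq by metis
  qed
qed


definition "i0 = (LEAST i. 1 \<le> i \<and> a i \<noteq> 0)"

lemma i0_props: "1 \<le> i0" "i0 \<le> k" "a i0 \<noteq> 0" "\<And>i. 1 \<le> i \<Longrightarrow> i < i0 \<Longrightarrow> a i = 0"
proof -
  have ex: "1 \<le> k \<and> a k \<noteq> 0" using k akn by simp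
  show "1 \<le> i0" "a i0 \<noteq> 0" using LeastI[of "\<lambda>i. 1 \<le> i \<and> a i \<noteq> 0", OF ex] unfolding i0_def by auto
  show "i0 \<le> k" unfolding i0_def by (rule Least_le) (rule ex)
  fix i assume "1 \<le> i" "i < i0"
  then show "a i = 0" using not_less_Least[of i "\<lambda>i. 1 \<le> i \<and> a i \<noteq> 0"] unfolding i0_def by auto
qed

lemma NN_pos: "0 < NN"
proof -
  have "a k * p^k \<le> NN" unfolding NN_def using k by (intro member_le_sum) auto
  moreover have "0 < a k * p^k" using akn p0 by simp
  ultimately show ?thesis by linarith
qed

lemma NN_mod_small: "j \<le> i0 \<Longrightarrow> NN mod p^j = 0"
  unfolding NN_mod using i0_props(4) by (intro sum.neutral) auto

lemma NN_mod_big: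
  assumes "i0 < j" shows "a i0 * p^i0 \<le> NN mod p^j"
  unfolding NN_mod using assms i0_props(1,2) by (intro member_le_sum) auto

lemma minus1_mod:
  assumes "q dvd (N::nat)" "1 \<le> N" "0 < q"
  shows "(N - 1) mod q = q - 1"
proof -
  obtain t where t: "N = q * t" using assms(1) by blast
  then have "1 \<le> t" using assms(2) by (cases t) auto
  then have eq: "N - 1 = q * (t - 1) + (q - 1)" using t assms(3)
    by (cases t) (auto simp: algebra_simps)
  have "(N - 1) mod q = (q * (t - 1) + (q - 1)) mod q" unfolding eq ..
  also have "\<dots> = (q - 1) mod q" by (rule mod_mult_self4)
  also have "\<dots> = q - 1" using assms(3) by simp
  finally show ?thesis .
qed

definition "ee z = (if z i0 = 0 then 1 else (0::nat))"

lemma Xs_pos: "z \<in> Zs k a \<Longrightarrow> 1 \<le> Xs p k z"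
proof -
  assume z: "z \<in> Zs k a"
  have "1 \<le> z k" using Zs_props(3)[OF z] by simp
  moreover have "z k * p^k \<le> Xs p k z" unfolding Xs_def using k by (intro member_le_sum) auto
  moreover have "1 \<le> p^k" using p0 by simp
  ultimately have "1 * 1 \<le> z k * p^k" by (intro mult_le_mono) auto
  then show ?thesis using \<open>z k * p^k \<le> Xs p k z\<close> by linarith
qed

lemma kummer_cond_nil:
  assumes z: "z \<in> Zs k a"
  shows "\<not> p dvd ((NN - 1) choose (NN - (Xs p k z + ee z)))"
proof (rule kummer[OF p])
  let ?X = "Xs p k z"
  have X1: "1 \<le> ?X" by (rule Xs_pos[OF z])
  show "NN - (?X + ee z) \<le> NN - 1" using X1 by simp
  show "\<forall>j. (NN - (?X + ee z)) mod p^j \<le> (NN - 1) mod p^j"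
  proof
    fix j
    have pj: "0 < p^j" using p0 by simp
    show "(NN - (?X + ee z)) mod p^j \<le> (NN - 1) mod p^j"
    proof (cases "j \<le> i0")
      case True
      have "p^j dvd NN" using NN_mod_small[OF True] by (simp add: dvd_eq_mod_eq_0)
      then have "(NN - 1) mod p^j = p^j - 1" using NN_pos pj by (intro minus1_mod) auto
      moreover have "(NN - (?X + ee z)) mod p^j < p^j" using pj by simp
      ultimately show ?thesis by simp
    next
      case False
      then have j: "i0 < j" by simp
      have "1 \<le> a i0 * p^i0" using i0_props(3) p0 by simp
      then have Nm1: "1 \<le> NN mod p^j" using NN_mod_big[OF j] by linarith
      have NN1: "(NN - 1) mod p^j = NN mod p^j - 1" by (rule mod_minus1[OF Nm1])
      have ym: "(NN - ?X) mod p^j = NN mod p^j - ?X mod p^j"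
        by (rule sub_mod[OF Xs_le[OF z] Xs_dig[OF z]])
      have i0S: "i0 \<in> {i\<in>{1..k}. i < j}" using i0_props(1,2) j by auto
      show ?thesis
      proof (cases "z i0 = 0")
        case False
        then have e: "ee z = 0" unfolding ee_def by simp
        have "z i0 * p^i0 \<le> ?X mod p^j" unfolding Xs_mod[OF z] by (rule member_le_sum[OF i0S]) auto
        moreover have "1 \<le> z i0 * p^i0" using False p0 by simp
        ultimately have X1: "1 \<le> ?X mod p^j" by linarith
        have "(NN - (?X + ee z)) mod p^j = NN mod p^j - ?X mod p^j" using e ym by simp
        then show ?thesis using NN1 X1 by linarith
      next
        case True
        then have e: "ee z = 1" unfolding ee_def by simp
        let ?S = "{i\<in>{1..k}. i < j}"
        have fS: "finite ?S" by simp
        have "(\<Sum>i\<in>?S. z i * p^i) + a i0 * p^i0 \<le> (\<Sum>i\<in>?S. a i * p^i)"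
        proof -
          have "(\<Sum>i\<in>?S. z i * p^i) = z i0 * p^i0 + (\<Sum>i\<in>?S - {i0}. z i * p^i)" by (rule sum.remove[OF fS i0S])
          also have "\<dots> = (\<Sum>i\<in>?S - {i0}. z i * p^i)" using True by simp
          also have "\<dots> \<le> (\<Sum>i\<in>?S - {i0}. a i * p^i)" using Zs_props(1)[OF z] by (intro sum_mono mult_le_mono1) auto
          finally have "(\<Sum>i\<in>?S. z i * p^i) + a i0 * p^i0 \<le> a i0 * p^i0 + (\<Sum>i\<in>?S - {i0}. a i * p^i)" by simp
          also have "\<dots> = (\<Sum>i\<in>?S. a i * p^i)" by (rule sum.remove[OF fS i0S, symmetric])
          finally show ?thesis .
        qed
        then have "a i0 * p^i0 \<le> NN mod p^j - ?X mod p^j" unfolding NN_mod Xs_mod[OF z] by linarith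
        then have y1: "1 \<le> (NN - ?X) mod p^j" using ym \<open>1 \<le> a i0 * p^i0\<close> by linarith
        have "NN - (?X + ee z) = (NN - ?X) - 1" using e by simp
        then have "(NN - (?X + ee z)) mod p^j = (NN - ?X) mod p^j - 1" using mod_minus1[OF y1] by simp
        then show ?thesis using ym NN1 by simp
      qed
    qed
  qed
qed

lemma ee_inj: "inj_on (\<lambda>z. Xs p k z + ee z) (Zs k a)"
proof (rule inj_onI)
  fix z1 z2 assume z1: "z1 \<in> Zs k a" and z2: "z2 \<in> Zs k a" and eq: "Xs p k z1 + ee z1 = Xs p k z2 + ee z2"
  have m: "(Xs p k z + ee z) mod p = ee z" for z
  proof -
    obtain t where "Xs p k z = p * t" using dvd_Xs by blast
    moreover have "ee z < p" using p2 unfolding ee_def by auto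
    ultimately show ?thesis by simp
  qed
  have "ee z1 = ee z2" using m[of z1] m[of z2] eq by simp
  then have "Xs p k z1 = Xs p k z2" using eq by simp
  then show "z1 = z2" using Xs_inj z1 z2 by (meson inj_onD)
qed

end

lemma star_zero_nil: "star [] 0 y = replicate y 1"
  by (simp add: star_def first_part_def)

lemma first_part_conj_rep: "first_part_conj (replicate y 1) = y"
proof -
  have "{i. i < length (replicate y (1::nat)) \<and> 0 < replicate y (1::nat) ! i} = {..<y}" by auto
  then show ?thesis unfolding first_part_conj_def conj_part_def by simp
qed

lemma first_part_rep: "0 < y \<Longrightarrow> first_part (replicate y 1) = 1"
  by (simp add: first_part_def)

lemma nil_fp: "0 < x \<Longrightarrow> first_part (star [] x y) = x"
  using star_first_part[OF part_1, of "x - 1" y] star_nil[of x y] by simp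

lemma nil_fpc: "0 < x \<Longrightarrow> first_part_conj (star [] x y) = 1 + y"
  using star_first_part_conj[OF part_1, of "x - 1" y] star_nil[of x y] by simp

lemma len_le_sum: "is_partition gm \<Longrightarrow> length gm \<le> sum_list gm"
  by (cases "gm = []") (auto intro: le_trans[OF b0_ge_len b0_le_sum])

lemma hd_le_sum: "is_partition gm \<Longrightarrow> gm \<noteq> [] \<Longrightarrow> gm!0 \<le> sum_list gm"
  by (rule elem_le_sum_list) simp

lemma Omega_elem:
  assumes "la \<in> Omega_set p n gm"
  shows "is_partition la" "sum_list la = n" "\<not> p dvd char_degree la" "(remove_hook p)\<^sup>*\<^sup>* la gm"
    "\<exists>x\<le>n - n mod p. la = star gm x (n - n mod p - x)" "first_part_conj la < first_part la"
  using assms unfolding Omega_set_def H_set_def partition_of_def is_p_core_of_def by auto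

lemma HP_lt:
  assumes p: "prime p" and gm: "is_partition gm" "sum_list gm < p" and Np: "p \<le> N"
    and l1: "star gm x1 (N - x1) \<in> Omega_set p n gm" and l2: "star gm x2 (N - x2) \<in> Omega_set p n gm"
    and x: "x1 < x2" "x2 \<le> N"
  shows "HP (star gm x1 (N - x1)) < HP (star gm x2 (N - x2))"
proof (cases "gm = []")
  case False
  have d1: "p dvd x1" by (rule core_dvd_x[OF p gm(1) False gm(2) Omega_elem(4)[OF l1]])
  have d2: "p dvd x2" by (rule core_dvd_x[OF p gm(1) False gm(2) Omega_elem(4)[OF l2]])
  have "p dvd x2 - x1" by (rule dvd_diff_nat[OF d2 d1])
  then have dp: "p \<le> x2 - x1" using x by (intro dvd_imp_le) auto
  have reg: "length gm + (N - x1) < gm!0 + x1"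
    using Omega_elem(6)[OF l1] star_first_part[OF gm(1) False] star_first_part_conj[OF gm(1) False] by simp
  have g1: "gm!0 \<le> sum_list gm" by (rule hd_le_sum[OF gm(1) False])
  show ?thesis
    by (rule HP_star_mono[OF gm(1) False x(1)]) (use x reg g1 gm(2) dp in linarith)+
next
  case True
  have x10: "0 < x1"
  proof (rule ccontr)
    assume "\<not> 0 < x1"
    then have "x1 = 0" by simp
    then have "star gm x1 (N - x1) = replicate N 1" using True star_zero_nil by simp
    moreover have "N > 1" using Np prime_ge_2_nat[OF p] by simp
    ultimately show False using Omega_elem(6)[OF l1] first_part_conj_rep first_part_rep by simp
  qed
  have reg: "1 + (N - x1) < x1" using Omega_elem(6)[OF l1] True nil_fp[OF x10] nil_fpc[OF x10] by simp
  show ?thesis unfolding True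
    by (rule HP_star_mono_nil[OF x10 x(1)]) (use x reg in linarith)+
qed

lemma Omega_inj:
  assumes p: "prime p" and gm: "is_partition gm" "sum_list gm < p" and Np: "p \<le> n - n mod p"
  shows "inj_on char_degree (Omega_set p n gm)"
proof (rule inj_onI, rule ccontr)
  define N where "N = n - n mod p"
  fix la1 la2 assume l1: "la1 \<in> Omega_set p n gm" and l2: "la2 \<in> Omega_set p n gm"
    and eq: "char_degree la1 = char_degree la2" and ne: "la1 \<noteq> la2"
  obtain x1 where x1: "x1 \<le> N" "la1 = star gm x1 (N - x1)" using Omega_elem(5)[OF l1] unfolding N_def by blast
  obtain x2 where x2: "x2 \<le> N" "la2 = star gm x2 (N - x2)" using Omega_elem(5)[OF l2] unfolding N_def by blast
  have ex1: "char_degree la1 * HP la1 = fact n" using char_degree_exact[OF Omega_elem(1)[OF l1]] Omega_elem(2)[OF l1] by simp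
  have ex2: "char_degree la2 * HP la2 = fact n" using char_degree_exact[OF Omega_elem(1)[OF l2]] Omega_elem(2)[OF l2] by simp
  have "HP la1 \<noteq> HP la2"
  proof (cases "x1 < x2")
    case True
    have "HP la1 < HP la2" unfolding x1(2) x2(2)
      by (rule HP_lt[OF p gm _ _ _ True x2(1)]) (use Np l1 l2 x1 x2 in \<open>simp_all add: N_def\<close>)
    then show ?thesis by simp
  next
    case False
    then have "x2 < x1" using ne x1 x2 by (cases "x1 = x2") auto
    have "HP la2 < HP la1" unfolding x1(2) x2(2)
      by (rule HP_lt[OF p gm _ _ _ \<open>x2 < x1\<close> x1(1)]) (use Np l1 l2 x1 x2 in \<open>simp_all add: N_def\<close>)
    then show ?thesis by simp
  qed
  moreover have c0: "char_degree la1 \<noteq> 0" using ex1 by (metis fact_nonzero mult_eq_0_iff)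
  moreover have "char_degree la1 * HP la1 = char_degree la1 * HP la2" using ex1 ex2 eq by simp
  ultimately show False using mult_left_cancel[OF c0] by blast
qed


lemma n_facts:
  assumes p: "prime p" and k: "1 \<le> k" and n: "n = (\<Sum>i\<le>k. a i * p ^ i)" and ak: "\<forall>i\<le>k. a i < p"
    and akn: "a k \<noteq> 0"
  shows "n = a 0 + NN p k a" "n mod p = a 0" "n - n mod p = NN p k a"
proof -
  have "{..k} = insert 0 {1..k}" by auto
  then show n1: "n = a 0 + NN p k a" unfolding n NN_def[OF p k ak akn] by simp
  have "p dvd NN p k a" unfolding NN_def[OF p k ak akn] by (rule dvd_sum) (auto intro: dvd_mult dvd_power)
  then obtain t where "NN p k a = p * t" by blast
  moreover have "a 0 < p" using ak by simp
  ultimately show n2: "n mod p = a 0" unfolding n1 by simp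
  show "n - n mod p = NN p k a" unfolding n2 using n1 by simp
qed

lemma fam_nonempty:
  assumes p: "prime p" and k: "1 \<le> k" and ak: "\<forall>i\<le>k. a i < p" and akn: "a k \<noteq> 0"
    and gm: "is_partition gm" "gm \<noteq> []" "sum_list gm = a 0"
    and n: "n = a 0 + NN p k a" "n mod p = a 0"
    and z: "z \<in> Zs k a"
  shows "star gm (Xs p k z) (NN p k a - Xs p k z) \<in> Omega_set p n gm"
proof -
  let ?N = "NN p k a" and ?X = "Xs p k z"
  let ?la = "star gm ?X (?N - ?X)"
  have XN: "?X \<le> ?N" by (rule Xs_le[OF p k ak akn z])
  have dN: "p dvd ?N" by (rule dvd_NN[OF p k ak akn])
  have dX: "p dvd ?X" by (rule dvd_Xs[OF p k ak akn])
  have dY: "p dvd ?N - ?X" by (rule dvd_diff_nat[OF dN dX])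
  have big: "?N - ?X + p \<le> ?X" by (rule Xs_big[OF p k ak akn z])
  have m: "sum_list gm < p" using gm(3) ak by simp
  have part: "partition_of ?la n"
    unfolding partition_of_def using star_partition[OF gm(1,2)] star_sum[OF gm(1,2)] XN gm(3) n(1) by simp
  have deg: "\<not> p dvd char_degree ?la"
  proof (rule padic_star[OF p gm(1,2) m dX dY])
    have "\<not> p dvd (?N choose ?X)"
      by (rule kummer[OF p XN]) (use Xs_dig[OF p k ak akn z] in auto)
    then show "\<not> p dvd (?X + (?N - ?X) choose ?X)" using XN by simp
  qed
  have core: "is_p_core_of p ?la gm"
    unfolding is_p_core_of_def
    using chain_to_core[OF gm(1,2) _ dX dY] no_hook_small[OF m] prime_gt_0_nat[OF p] by simp
  have ex: "\<exists>x\<le>n - n mod p. ?la = star gm x (n - n mod p - x)"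
    using XN n by (intro exI[of _ ?X]) simp
  have reg: "first_part_conj ?la < first_part ?la"
  proof -
    have "length gm \<le> sum_list gm" by (rule len_le_sum[OF gm(1)])
    then show ?thesis unfolding star_first_part[OF gm(1,2)] star_first_part_conj[OF gm(1,2)]
      using big m by linarith
  qed
  show ?thesis unfolding Omega_set_def H_set_def using part deg core ex reg by simp
qed

lemma fam_nil:
  assumes p: "prime p" and k: "1 \<le> k" and ak: "\<forall>i\<le>k. a i < p" and akn: "a k \<noteq> 0"
    and n: "n = NN p k a" "n mod p = 0"
    and z: "z \<in> Zs k a"
  shows "star [] (Xs p k z + ee a z) (NN p k a - (Xs p k z + ee a z)) \<in> Omega_set p n []"
proof -
  let ?N = "NN p k a" and ?X = "Xs p k z"
  let ?x = "?X + ee a z"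
  let ?la = "star [] ?x (?N - ?x)"
  have XN: "?X \<le> ?N" by (rule Xs_le[OF p k ak akn z])
  have X1: "1 \<le> ?X" by (rule Xs_pos[OF p k ak akn z])
  have dN: "p dvd ?N" by (rule dvd_NN[OF p k ak akn])
  have big: "?N - ?X + p \<le> ?X" by (rule Xs_big[OF p k ak akn z])
  have xN: "?x \<le> ?N"
  proof (cases "ee a z = 0")
    case True then show ?thesis using XN by simp
  next
    case False
    then have zi: "z (i0 a) = 0" and e1: "ee a z = 1" unfolding ee_def[OF p k ak akn] by (auto split: if_splits)
    note ip = i0_props[OF p k ak akn]
    have "?X mod p^(Suc (i0 a)) = 0"
      unfolding Xs_mod[OF p k ak akn z]
    proof (rule sum.neutral, rule ballI)
      fix i assume i: "i \<in> {i\<in>{1..k}. i < Suc (i0 a)}"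
      show "z i * p^i = 0"
      proof (cases "i = i0 a")
        case True then show ?thesis using zi by simp
      next
        case False
        then have "a i = 0" using ip(4)[of i] i by auto
        then show ?thesis using Zs_props(1)[OF p k ak akn z] i by fastforce
      qed
    qed
    moreover have "1 \<le> ?N mod p^(Suc (i0 a))"
    proof -
      have "a (i0 a) * p^(i0 a) \<le> ?N mod p^(Suc (i0 a))" by (rule NN_mod_big[OF p k ak akn]) simp
      moreover have "1 \<le> a (i0 a) * p^(i0 a)" using ip(3) prime_gt_0_nat[OF p] by simp
      ultimately show ?thesis by linarith
    qed
    ultimately have "?X \<noteq> ?N" by auto
    then show ?thesis using XN e1 by simp
  qed
  have x0: "0 < ?x" using X1 by simp
  have part: "partition_of ?la n"
  proof -
    have "is_partition ?la" using star_nil[OF x0] star_partition[OF part_1] by simp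
    moreover have "sum_list ?la = Suc (?x - 1 + (?N - ?x))" using star_nil[OF x0] star_sum[OF part_1] by simp
    then have "sum_list ?la = n" using x0 xN n(1) by linarith
    ultimately show ?thesis unfolding partition_of_def by simp
  qed
  have deg: "\<not> p dvd char_degree ?la"
  proof (rule padic_nil[OF p x0])
    have "\<not> p dvd ((?N - 1) choose (?N - ?x))" by (rule kummer_cond_nil[OF p k ak akn z])
    moreover have "?x + (?N - ?x) - 1 = ?N - 1" using xN by simp
    ultimately show "\<not> p dvd ((?x + (?N - ?x) - 1) choose (?N - ?x))" by simp
  qed
  have core: "is_p_core_of p ?la []"
    unfolding is_p_core_of_def
    using chain_to_empty[OF prime_gt_0_nat[OF p] x0] dN xN no_hook_small[of "[]" p] prime_gt_0_nat[OF p]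
    by simp
  have ex: "\<exists>x\<le>n - n mod p. ?la = star [] x (n - n mod p - x)"
    using xN n by (intro exI[of _ ?x]) simp
  have reg: "first_part_conj ?la < first_part ?la"
    unfolding nil_fp[OF x0] nil_fpc[OF x0] using big prime_ge_2_nat[OF p] by linarith
  show ?thesis unfolding Omega_set_def H_set_def using part deg core ex reg by simp
qed

theorem lemma3p5:
  fixes p n k :: nat and a :: "nat \<Rightarrow> nat" and gm :: "nat list"
  assumes "prime p"
    and "k \<ge> 1"
    and "n = (\<Sum>i\<le>k. a i * p ^ i)"
    and "\<forall>i\<le>k. a i < p"
    and "a k \<noteq> 0"
    and "partition_of gm (a 0)"
  shows "card (cd (Omega_set p n gm)) = card (Omega_set p n gm) \<and>
         card (Omega_set p n gm) \<ge> ((a k + 1) div 2) * (\<Prod>i\<in>{1..k-1}. (a i + 1))"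
proof -
  note p = assms(1) and k = assms(2) and ak = assms(4) and akn = assms(5)
  note nf = n_facts[OF p k assms(3) ak akn]
  let ?N = "NN p k a"
  have gm: "is_partition gm" "sum_list gm = a 0" using assms(6) by (auto simp: partition_of_def)
  have m: "sum_list gm < p" using gm(2) ak by simp
  have Np: "p \<le> ?N"
  proof -
    have "a k * p^k \<le> ?N" unfolding NN_def[OF p k ak akn] using k by (intro member_le_sum) auto
    moreover have "p \<le> a k * p^k"
    proof -
      have "p \<le> p^k" using k prime_gt_0_nat[OF p] by (metis le_less one_le_power power_increasing power_one_right prime_gt_1_nat p)
      also have "\<dots> \<le> a k * p^k" using akn by simp
      finally show ?thesis .
    qed
    ultimately show ?thesis by linarith
  qed
  have inj: "inj_on char_degree (Omega_set p n gm)"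
    by (rule Omega_inj[OF p gm(1) m]) (use Np nf in simp)
  have fin: "finite (Omega_set p n gm)"
  proof (rule finite_subset)
    show "Omega_set p n gm \<subseteq> (\<lambda>x. star gm x (n - n mod p - x)) ` {..n - n mod p}"
      using Omega_elem(5) by blast
  qed simp
  have lower: "card (Zs k a) \<le> card (Omega_set p n gm)"
  proof (cases "gm = []")
    case False
    let ?f = "\<lambda>z. star gm (Xs p k z) (?N - Xs p k z)"
    have sub: "?f ` Zs k a \<subseteq> Omega_set p n gm"
      using fam_nonempty[OF p k ak akn gm(1) False gm(2) nf(1) nf(2)] by blast
    have "inj_on ?f (Zs k a)"
    proof (rule inj_onI)
      fix z1 z2 assume z1: "z1 \<in> Zs k a" and z2: "z2 \<in> Zs k a" and eq: "?f z1 = ?f z2"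
      then have "first_part (?f z1) = first_part (?f z2)" by simp
      then have "Xs p k z1 = Xs p k z2" unfolding star_first_part[OF gm(1) False] by simp
      then show "z1 = z2" using Xs_inj[OF p k ak akn] z1 z2 by (meson inj_onD)
    qed
    then have "card (?f ` Zs k a) = card (Zs k a)" by (rule card_image)
    then show ?thesis using card_mono[OF fin sub] by simp
  next
    case True
    have a0: "a 0 = 0" using gm(2) True by simp
    let ?f = "\<lambda>z. star [] (Xs p k z + ee a z) (?N - (Xs p k z + ee a z))"
    have sub: "?f ` Zs k a \<subseteq> Omega_set p n gm"
      using fam_nil[OF p k ak akn _ _] nf a0 True by auto
    have "inj_on ?f (Zs k a)"
    proof (rule inj_onI)
      fix z1 z2 assume z1: "z1 \<in> Zs k a" and z2: "z2 \<in> Zs k a" and eq: "?f z1 = ?f z2"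
      have x0: "0 < Xs p k z + ee a z" if "z \<in> Zs k a" for z using Xs_pos[OF p k ak akn that] by simp
      have "first_part (?f z1) = first_part (?f z2)" using eq by simp
      then have "Xs p k z1 + ee a z1 = Xs p k z2 + ee a z2" unfolding nil_fp[OF x0[OF z1]] nil_fp[OF x0[OF z2]] .
      then show "z1 = z2" using ee_inj[OF p k ak akn] z1 z2 by (meson inj_onD)
    qed
    then have "card (?f ` Zs k a) = card (Zs k a)" by (rule card_image)
    then show ?thesis using card_mono[OF fin sub] by simp
  qed
  show ?thesis
  proof
    show "card (cd (Omega_set p n gm)) = card (Omega_set p n gm)"
      unfolding cd_def by (rule card_image[OF inj])
    show "((a k + 1) div 2) * (\<Prod>i\<in>{1..k-1}. (a i + 1)) \<le> card (Omega_set p n gm)"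
      using lower card_Zs[OF k, of a] by simp
  qed
qed

end
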